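(* Let $\Gamma$ be a finite group, $G=(V,E)$ a finite simple graph, $\phi:\Gamma\to\operatorname{Aut}(G)$ a homomorphism and $\tau:\Gamma\to O(\mathbb{R}^3)$ an injective homomorphism whose image $\tau(\Gamma)$ is one of the groups $C_i,C_s,C_2,C_{2v},C_{2h}$ below. If $(G,p)$ is a $\Gamma$-symmetric framework on $\mathcal{Y}$ (with respect to $\phi,\tau$) which is isostatic, then $G$ is $(2,2)$-tight and: - if $\tau(\Gamma)=C_i$: the element mapped to the inversion fixes no edge; - if $\tau(\Gamma)=C_s$: the element mapped to the reflection fixes no edge; - if $\tau(\Gamma)=C_2$: the element mapped to $c_2'$ fixes either exactly two edges and no vertex, or no edge and exactly one vertex; - if $\tau(\Gamma)=C_{2v}$: the elements mapped to $\sigma$ and $\sigma'$ fix no edge, and the element mapped to $c_2'$ fixes either exactly two edges and no vertex, or no edge and exactly one vertex; - if $\tau(\Gamma)=C_{2h}$: the elements mapped to $\sigma$ and to the inversion fix no edge, and the element mapped to $c_2'$ fixes exactly two edges and no vertex.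
   Context: $\mathcal{Y}=\{(x,y,z)\in\mathbb{R}^3:x^2+y^2=1\}$. A framework on $\mathcal{Y}$ is a pair $(G,p)$, $G=(V,E)$ finite simple, $p:V\to\mathcal{Y}$ with $p(u)\ne p(v)$ for $uv\in E$. Its rigidity matrix $R_{\mathcal{Y}}(G,p)$ is the $(|E|+|V|)\times 3|V|$ matrix with, for each edge $v_iv_j$, a row with $p(v_i)-p(v_j)$ in the columns of $v_i$, $p(v_j)-p(v_i)$ in the columns of $v_j$, zeros elsewhere, and for each vertex $v_i$ with $p(v_i)=(x_i,y_i,z_i)$ a row with $(x_i,y_i,0)$ in the columns of $v_i$, zeros elsewhere. Trivial infinitesimal motions are $u_i=(0,0,a)+b(-y_i,x_i,0)$. $(G,p)$ is infinitesimally rigid if every kernel vector of $R_{\mathcal{Y}}(G,p)$ is trivial, independent if its rows are linearly independent, isostatic if both. $(G,p)$ is $\Gamma$-symmetric w.r.t. $\phi,\tau$ if $\tau(\gamma)p(v)=p(\phi(\gamma)v)$ for all $v,\gamma$. A vertex $v$ is fixed by $\gamma$ if $\phi(\gamma)v=v$; an edge $uv$ is fixed if $\phi(\gamma)$ fixes both endpoints or swaps them. A graph is $(2,2)$-sparse if every subgraph $(V',E')$ with $V'\neq\emptyset$ has $|E'|\le 2|V'|-2$, and $(2,2)$-tight if moreover $|E|=2|V|-2$. Symmetry operations: $\sigma$ = reflection in a plane containing the $z$-axis; $\sigma'$ = reflection in the $xy$-plane; $c_2'$ = half-turn about a line through the origin perpendicular to the $z$-axis; $\varphi=-I$ the inversion.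 Groups: $C_i=\{\mathrm{id},\varphi\}$; $C_s=\{\mathrm{id},\sigma\}$ or $\{\mathrm{id},\sigma'\}$; $C_2=\{\mathrm{id},c_2'\}$; $C_{2v}=\{\mathrm{id},\sigma,\sigma',c_2'\}$; $C_{2h}=\{\mathrm{id},\sigma,c_2',\varphi\}$ (with the axis of $c_2'$ perpendicular to the plane of $\sigma$). *)

theory Defs
  imports "HOL-Analysis.Analysis" "HOL-Algebra.Group"
begin

definition simple_graph :: "'v set \<Rightarrow> 'v set set \<Rightarrow> bool" where
  "simple_graph V E \<longleftrightarrow> finite V \<and>
     (\<forall>e\<in>E. \<exists>u v. e = {u, v} \<and> u \<noteq> v \<and> u \<in> V \<and> v \<in> V)"

definition on_cylinder :: "real^3 \<Rightarrow> bool" where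
  "on_cylinder q \<longleftrightarrow> (q$1)^2 + (q$2)^2 = 1"

definition cyl_framework :: "'v set \<Rightarrow> 'v set set \<Rightarrow> ('v \<Rightarrow> real^3) \<Rightarrow> bool" where
  "cyl_framework V E p \<longleftrightarrow> simple_graph V E \<and> (\<forall>v\<in>V. on_cylinder (p v)) \<and>
     (\<forall>u v. {u, v} \<in> E \<longrightarrow> u \<noteq> v \<longrightarrow> p u \<noteq> p v)"

text \<open>Rows of the rigidity matrix, as functions assigning to each vertex its 3 columns.
  Edge row of e = {vi,vj}: p(vi)-p(vj) in the columns of vi, p(vj)-p(vi) in those of vj.\<close>
definition edge_row :: "('v \<Rightarrow> real^3) \<Rightarrow> 'v set \<Rightarrow> 'v \<Rightarrow> real^3" where
  "edge_row p e = (\<lambda>w. if w \<in> e then (\<Sum>u\<in>e - {w}. p w - p u) else 0)"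

definition vertex_row :: "('v \<Rightarrow> real^3) \<Rightarrow> 'v \<Rightarrow> 'v \<Rightarrow> real^3" where
  "vertex_row p v = (\<lambda>w. if w = v then vector [p v $ 1, p v $ 2, 0] else 0)"

definition in_kernel :: "'v set \<Rightarrow> 'v set set \<Rightarrow> ('v \<Rightarrow> real^3) \<Rightarrow> ('v \<Rightarrow> real^3) \<Rightarrow> bool" where
  "in_kernel V E p u \<longleftrightarrow>
     (\<forall>e\<in>E. (\<Sum>w\<in>V. edge_row p e w \<bullet> u w) = 0) \<and>
     (\<forall>v\<in>V. (\<Sum>w\<in>V. vertex_row p v w \<bullet> u w) = 0)"

definition trivial_motion :: "'v set \<Rightarrow> ('v \<Rightarrow> real^3) \<Rightarrow> ('v \<Rightarrow> real^3) \<Rightarrow> bool" where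
  "trivial_motion V p u \<longleftrightarrow> (\<exists>a b. \<forall>w\<in>V.
      u w = vector [0, 0, a] + b *\<^sub>R vector [- (p w $ 2), p w $ 1, 0])"

definition inf_rigid :: "'v set \<Rightarrow> 'v set set \<Rightarrow> ('v \<Rightarrow> real^3) \<Rightarrow> bool" where
  "inf_rigid V E p \<longleftrightarrow> (\<forall>u. in_kernel V E p u \<longrightarrow> trivial_motion V p u)"

definition independent_fw :: "'v set \<Rightarrow> 'v set set \<Rightarrow> ('v \<Rightarrow> real^3) \<Rightarrow> bool" where
  "independent_fw V E p \<longleftrightarrow> (\<forall>c d.
     (\<forall>w\<in>V. (\<Sum>e\<in>E. c e *\<^sub>R edge_row p e w) + (\<Sum>v\<in>V. d v *\<^sub>R vertex_row p v w) = 0)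
     \<longrightarrow> (\<forall>e\<in>E. c e = 0) \<and> (\<forall>v\<in>V. d v = 0))"

definition isostatic :: "'v set \<Rightarrow> 'v set set \<Rightarrow> ('v \<Rightarrow> real^3) \<Rightarrow> bool" where
  "isostatic V E p \<longleftrightarrow> inf_rigid V E p \<and> independent_fw V E p"

definition sparse22 :: "'v set \<Rightarrow> 'v set set \<Rightarrow> bool" where
  "sparse22 V E \<longleftrightarrow> (\<forall>V' E'. V' \<noteq> {} \<and> V' \<subseteq> V \<and> E' \<subseteq> E \<and> (\<forall>e\<in>E'. e \<subseteq> V')
      \<longrightarrow> int (card E') \<le> 2 * int (card V') - 2)"

definition tight22 :: "'v set \<Rightarrow> 'v set set \<Rightarrow> bool" where
  "tight22 V E \<longleftrightarrow> sparse22 V E \<and> int (card E) = 2 * int (card V) - 2"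

definition graph_aut :: "'v set \<Rightarrow> 'v set set \<Rightarrow> ('v \<Rightarrow> 'v) \<Rightarrow> bool" where
  "graph_aut V E f \<longleftrightarrow> bij_betw f V V \<and>
     (\<forall>u\<in>V. \<forall>v\<in>V. {u, v} \<in> E \<longleftrightarrow> {f u, f v} \<in> E)"

definition aut_hom :: "('g, 'b) monoid_scheme \<Rightarrow> 'v set \<Rightarrow> 'v set set \<Rightarrow> ('g \<Rightarrow> 'v \<Rightarrow> 'v) \<Rightarrow> bool" where
  "aut_hom \<Gamma> V E \<phi> \<longleftrightarrow> (\<forall>g\<in>carrier \<Gamma>. graph_aut V E (\<phi> g)) \<and>
     (\<forall>g\<in>carrier \<Gamma>. \<forall>h\<in>carrier \<Gamma>. \<forall>v\<in>V. \<phi> (g \<otimes>\<^bsub>\<Gamma>\<^esub> h) v = \<phi> g (\<phi> h v))"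

definition orth_rep :: "('g, 'b) monoid_scheme \<Rightarrow> ('g \<Rightarrow> real^3^3) \<Rightarrow> bool" where
  "orth_rep \<Gamma> \<tau> \<longleftrightarrow> (\<forall>g\<in>carrier \<Gamma>. orthogonal_matrix (\<tau> g)) \<and>
     (\<forall>g\<in>carrier \<Gamma>. \<forall>h\<in>carrier \<Gamma>. \<tau> (g \<otimes>\<^bsub>\<Gamma>\<^esub> h) = \<tau> g ** \<tau> h) \<and>
     inj_on \<tau> (carrier \<Gamma>)"

definition symmetric_fw :: "('g, 'b) monoid_scheme \<Rightarrow> 'v set \<Rightarrow> ('g \<Rightarrow> 'v \<Rightarrow> 'v)
     \<Rightarrow> ('g \<Rightarrow> real^3^3) \<Rightarrow> ('v \<Rightarrow> real^3) \<Rightarrow> bool" where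
  "symmetric_fw \<Gamma> V \<phi> \<tau> p \<longleftrightarrow> (\<forall>g\<in>carrier \<Gamma>. \<forall>v\<in>V. \<tau> g *v p v = p (\<phi> g v))"

definition fixed_vertices :: "'v set \<Rightarrow> ('v \<Rightarrow> 'v) \<Rightarrow> 'v set" where
  "fixed_vertices V f = {v\<in>V. f v = v}"

definition fixed_edges :: "'v set set \<Rightarrow> ('v \<Rightarrow> 'v) \<Rightarrow> 'v set set" where
  "fixed_edges E f = {e\<in>E. \<exists>u v. e = {u, v} \<and>
       ((f u = u \<and> f v = v) \<or> (f u = v \<and> f v = u))}"

definition outer :: "real^3 \<Rightarrow> real^3 \<Rightarrow> real^3^3" where
  "outer a b = (\<chi> i j. a $ i * b $ j)"

definition refl_mat :: "real^3 \<Rightarrow> real^3^3" where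
  "refl_mat n = mat 1 - 2 *\<^sub>R outer n n"

definition halfturn_mat :: "real^3 \<Rightarrow> real^3^3" where
  "halfturn_mat a = 2 *\<^sub>R outer a a - mat 1"

definition e3 :: "real^3" where "e3 = vector [0, 0, 1]"

definition is_sigma :: "real^3^3 \<Rightarrow> bool" where
  "is_sigma M \<longleftrightarrow> (\<exists>n. norm n = 1 \<and> n $ 3 = 0 \<and> M = refl_mat n)"

definition sigma' :: "real^3^3" where "sigma' = refl_mat e3"

definition is_c2' :: "real^3^3 \<Rightarrow> bool" where
  "is_c2' M \<longleftrightarrow> (\<exists>a. norm a = 1 \<and> a $ 3 = 0 \<and> M = halfturn_mat a)"

definition inversion :: "real^3^3" where "inversion = - mat 1"

definition is_Ci :: "(real^3^3) set \<Rightarrow> bool" where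
  "is_Ci S \<longleftrightarrow> S = {mat 1, inversion}"

definition is_Cs :: "(real^3^3) set \<Rightarrow> bool" where
  "is_Cs S \<longleftrightarrow> (\<exists>s. (is_sigma s \<or> s = sigma') \<and> S = {mat 1, s})"

definition is_C2 :: "(real^3^3) set \<Rightarrow> bool" where
  "is_C2 S \<longleftrightarrow> (\<exists>c. is_c2' c \<and> S = {mat 1, c})"

definition is_C2v :: "(real^3^3) set \<Rightarrow> bool" where
  "is_C2v S \<longleftrightarrow> (\<exists>s c. is_sigma s \<and> is_c2' c \<and> S = {mat 1, s, sigma', c})"

text \<open>C_2h: the axis of c2' is perpendicular to the plane of sigma, i.e. parallel to its normal.\<close>
definition is_C2h :: "(real^3^3) set \<Rightarrow> bool" where
  "is_C2h S \<longleftrightarrow> (\<exists>n. norm n = 1 \<and> n $ 3 = 0 \<and>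
      S = {mat 1, refl_mat n, halfturn_mat n, inversion})"

end

theory Submission
  imports Defs
begin


section \<open>Generic finite-dimensional linear algebra on functions\<close>

definition ip :: "'x set \<Rightarrow> ('x \<Rightarrow> real) \<Rightarrow> ('x \<Rightarrow> real) \<Rightarrow> real" where
  "ip W u v = (\<Sum>x\<in>W. u x * v x)"

definition indepW :: "'x set \<Rightarrow> 'i set \<Rightarrow> ('i \<Rightarrow> 'x \<Rightarrow> real) \<Rightarrow> bool" where
  "indepW W I f \<longleftrightarrow> (\<forall>c. (\<forall>x\<in>W. (\<Sum>i\<in>I. c i * f i x) = 0) \<longrightarrow> (\<forall>i\<in>I. c i = 0))"

lemma ip_sym: "ip W u v = ip W v u"
  unfolding ip_def by (simp add: mult.commute)

lemma ip_cong: "(\<And>x. x \<in> W \<Longrightarrow> v x = v' x) \<Longrightarrow> ip W u v = ip W u v'"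
  unfolding ip_def by (rule sum.cong) auto

lemma ip_diff_right: "ip W u (\<lambda>x. v x - w x) = ip W u v - ip W u w"
  unfolding ip_def by (simp add: right_diff_distrib sum_subtractf)

lemma ip_cmult_right: "ip W u (\<lambda>x. c * v x) = c * ip W u v"
  unfolding ip_def by (simp add: sum_distrib_left mult.assoc mult.left_commute)

lemma ip_div_right: "ip W u (\<lambda>x. v x / c) = ip W u v / c"
  unfolding ip_def by (simp add: sum_divide_distrib)

lemma ip_sum_right: "ip W u (\<lambda>x. \<Sum>l\<in>L. g l x) = (\<Sum>l\<in>L. ip W u (g l))"
  unfolding ip_def sum_distrib_left by (rule sum.swap)

lemma ip_add_right: "ip W u (\<lambda>x. v x + w x) = ip W u v + ip W u w"
  unfolding ip_def by (simp add: distrib_left sum.distrib)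

lemma ip_sum_cmult_right: "ip W u (\<lambda>x. \<Sum>l\<in>L. c l * g l x) = (\<Sum>l\<in>L. c l * ip W u (g l))"
  by (simp add: ip_sum_right ip_cmult_right)

lemma ip_delta: "finite W \<Longrightarrow> y \<in> W \<Longrightarrow> ip W u (\<lambda>z. if y = z then 1 else 0) = u y"
  unfolding ip_def by (simp add: if_distrib cong: if_cong)

lemma ip_self_nonneg: "ip W u u \<ge> 0"
  unfolding ip_def by (rule sum_nonneg) simp

lemma indepW_subset:
  assumes "indepW W I f" "J \<subseteq> I" "finite I"
  shows "indepW W J f"
  unfolding indepW_def
proof (intro allI impI)
  fix c assume h: "\<forall>x\<in>W. (\<Sum>i\<in>J. c i * f i x) = 0"
  define c' where "c' = (\<lambda>i. if i \<in> J then c i else 0)"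
  have "\<forall>x\<in>W. (\<Sum>i\<in>I. c' i * f i x) = 0"
  proof
    fix x assume "x \<in> W"
    have "(\<Sum>i\<in>I. c' i * f i x) = (\<Sum>i\<in>J. c i * f i x)"
      unfolding c'_def using assms(2,3)
      by (subst sum.mono_neutral_right[of I J]) auto
    then show "(\<Sum>i\<in>I. c' i * f i x) = 0" using h \<open>x \<in> W\<close> by simp
  qed
  then have "\<forall>i\<in>I. c' i = 0" using assms(1) unfolding indepW_def by blast
  then show "\<forall>i\<in>J. c i = 0" using assms(2) unfolding c'_def by (metis subsetD)
qed

definition dualprop :: "'x set \<Rightarrow> 'i set \<Rightarrow> ('i \<Rightarrow> 'x \<Rightarrow> real) \<Rightarrow> ('i \<Rightarrow> 'x \<Rightarrow> real) \<Rightarrow> ('i \<Rightarrow> 'i \<Rightarrow> real) \<Rightarrow> bool" where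
  "dualprop W I f k A \<longleftrightarrow> (\<forall>i\<in>I. \<forall>j\<in>I. ip W (f i) (k j) = (if i = j then 1 else 0)) \<and>
     (\<forall>j\<in>I. \<forall>x\<in>W. k j x = (\<Sum>i\<in>I. A j i * f i x))"

lemma dual_exists:
  assumes "finite I" "finite W" "indepW W I f"
  shows "\<exists>k A. dualprop W I f k A"
  using assms(1,3)
proof (induction I rule: finite_induct)
  case empty
  then show ?case unfolding dualprop_def by auto
next
  case (insert a R0)
  have "indepW W R0 f" using indepW_subset[OF insert.prems] insert.hyps by auto
  then obtain k' A' where d: "dualprop W R0 f k' A'" using insert.IH by blast
  have dk: "\<And>i j. i \<in> R0 \<Longrightarrow> j \<in> R0 \<Longrightarrow> ip W (f i) (k' j) = (if i = j then 1 else 0)"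
    using d unfolding dualprop_def by blast
  have dA: "\<And>j x. j \<in> R0 \<Longrightarrow> x \<in> W \<Longrightarrow> k' j x = (\<Sum>i\<in>R0. A' j i * f i x)"
    using d unfolding dualprop_def by blast
  define cc where "cc = (\<lambda>l. ip W (f a) (f l))"
  define s where "s = (\<lambda>x. f a x - (\<Sum>l\<in>R0. cc l * k' l x))"
  define \<beta> where "\<beta> = (\<lambda>i. if i = a then 1 else - (\<Sum>l\<in>R0. cc l * A' l i))"
  have s_comb: "s x = (\<Sum>i\<in>insert a R0. \<beta> i * f i x)" if "x \<in> W" for x
  proof -
    have "(\<Sum>l\<in>R0. cc l * k' l x) = (\<Sum>l\<in>R0. cc l * (\<Sum>i\<in>R0. A' l i * f i x))"
      using dA[OF _ that] by simp
    also have "\<dots> = (\<Sum>l\<in>R0. \<Sum>i\<in>R0. cc l * A' l i * f i x)"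
      by (simp add: sum_distrib_left mult.assoc)
    also have "\<dots> = (\<Sum>i\<in>R0. \<Sum>l\<in>R0. cc l * A' l i * f i x)"
      by (rule sum.swap)
    also have "\<dots> = (\<Sum>i\<in>R0. (\<Sum>l\<in>R0. cc l * A' l i) * f i x)"
      by (simp add: sum_distrib_right)
    finally have e1: "(\<Sum>l\<in>R0. cc l * k' l x) = (\<Sum>i\<in>R0. (\<Sum>l\<in>R0. cc l * A' l i) * f i x)" .
    have e2: "(\<Sum>i\<in>insert a R0. \<beta> i * f i x) = f a x + (\<Sum>i\<in>R0. \<beta> i * f i x)"
      using insert.hyps by (simp add: \<beta>_def)
    have e3: "(\<Sum>i\<in>R0. \<beta> i * f i x) = - (\<Sum>i\<in>R0. (\<Sum>l\<in>R0. cc l * A' l i) * f i x)"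
    proof -
      have "(\<Sum>i\<in>R0. \<beta> i * f i x) = (\<Sum>i\<in>R0. - ((\<Sum>l\<in>R0. cc l * A' l i) * f i x))"
        unfolding \<beta>_def using insert.hyps by (intro sum.cong) auto
      then show ?thesis by (simp add: sum_negf)
    qed
    show ?thesis unfolding s_def e1 e2 e3 by simp
  qed
  have orth: "ip W (f j) s = 0" if "j \<in> R0" for j
  proof -
    have "ip W (f j) s = ip W (f j) (f a) - (\<Sum>l\<in>R0. cc l * ip W (f j) (k' l))"
      unfolding s_def ip_diff_right ip_sum_cmult_right by simp
    also have "(\<Sum>l\<in>R0. cc l * ip W (f j) (k' l)) = (\<Sum>l\<in>R0. if j = l then cc l else 0)"
      using dk[OF that] by (intro sum.cong) auto
    also have "\<dots> = cc j" using that insert.hyps by simp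
    finally show ?thesis unfolding cc_def by (simp add: ip_sym)
  qed
  have s_ne: "\<exists>x\<in>W. s x \<noteq> 0"
  proof (rule ccontr)
    assume "\<not> ?thesis"
    then have "\<forall>x\<in>W. (\<Sum>i\<in>insert a R0. \<beta> i * f i x) = 0" using s_comb by auto
    then have "\<beta> a = 0" using insert.prems unfolding indepW_def by blast
    then show False unfolding \<beta>_def by simp
  qed
  define nn where "nn = ip W s s"
  have nn_pos: "nn > 0"
  proof -
    obtain x0 where x0: "x0 \<in> W" "s x0 \<noteq> 0" using s_ne by blast
    have "s x0 * s x0 \<le> nn" unfolding nn_def ip_def
      by (rule member_le_sum) (use x0 assms(2) in auto)
    moreover have "s x0 * s x0 > 0" using x0(2) not_real_square_gt_zero by blast
    ultimately show ?thesis by linarith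
  qed
  have ks0: "ip W (k' l) s = 0" if "l \<in> R0" for l
  proof -
    have "ip W (k' l) s = ip W s (k' l)" by (simp add: ip_sym)
    also have "\<dots> = ip W s (\<lambda>x. \<Sum>i\<in>R0. A' l i * f i x)"
      using dA[OF that] by (intro ip_cong) auto
    also have "\<dots> = (\<Sum>i\<in>R0. A' l i * ip W s (f i))" by (simp add: ip_sum_cmult_right)
    also have "\<dots> = 0" using orth by (simp add: ip_sym)
    finally show ?thesis .
  qed
  have fas: "ip W (f a) s = nn"
  proof -
    have "ip W (f a) s = ip W s (f a)" by (simp add: ip_sym)
    also have "\<dots> = ip W s (\<lambda>x. s x + (\<Sum>l\<in>R0. cc l * k' l x))"
      unfolding s_def by simp
    also have "\<dots> = ip W s s + (\<Sum>l\<in>R0. cc l * ip W s (k' l))"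
      by (simp add: ip_add_right ip_sum_cmult_right)
    also have "(\<Sum>l\<in>R0. cc l * ip W s (k' l)) = 0" using ks0 by (simp add: ip_sym)
    finally show ?thesis unfolding nn_def by simp
  qed
  define k where "k = (\<lambda>j x. if j = a then s x / nn else k' j x - ip W (f a) (k' j) * (s x / nn))"
  define A where "A = (\<lambda>j i. if j = a then \<beta> i / nn
      else (if i \<in> R0 then A' j i else 0) - ip W (f a) (k' j) * (\<beta> i / nn))"
  have ka: "ip W u (k a) = ip W u s / nn" for u
    unfolding k_def by (simp add: ip_div_right)
  have kj: "ip W u (k j) = ip W u (k' j) - ip W (f a) (k' j) * (ip W u s / nn)" if "j \<noteq> a" for u j
    unfolding k_def using that by (simp add: ip_diff_right ip_cmult_right ip_div_right)
  have P1: "\<forall>i\<in>insert a R0. \<forall>j\<in>insert a R0. ip W (f i) (k j) = (if i = j then 1 else 0)"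
  proof (intro ballI)
    fix i j assume i: "i \<in> insert a R0" and j: "j \<in> insert a R0"
    show "ip W (f i) (k j) = (if i = j then 1 else 0)"
    proof (cases "j = a")
      case True
      then show ?thesis using i orth fas nn_pos ka by auto
    next
      case False
      then have jR: "j \<in> R0" using j by auto
      show ?thesis
      proof (cases "i = a")
        case True
        then show ?thesis using kj[OF False] fas nn_pos False by simp
      next
        case False
        then have iR: "i \<in> R0" using i by auto
        show ?thesis using kj[OF \<open>j \<noteq> a\<close>] orth[OF iR] dk[OF iR jR] by simp
      qed
    qed
  qed
  have P2: "\<forall>j\<in>insert a R0. \<forall>x\<in>W. k j x = (\<Sum>i\<in>insert a R0. A j i * f i x)"
  proof (intro ballI)
    fix j x assume j: "j \<in> insert a R0" and x: "x \<in> W"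
    show "k j x = (\<Sum>i\<in>insert a R0. A j i * f i x)"
    proof (cases "j = a")
      case True
      then show ?thesis unfolding k_def A_def using s_comb[OF x]
        by (simp add: sum_divide_distrib[symmetric])
    next
      case False
      then have jR: "j \<in> R0" using j by auto
      have "(\<Sum>i\<in>insert a R0. A j i * f i x) =
          (\<Sum>i\<in>insert a R0. (if i \<in> R0 then A' j i else 0) * f i x)
          - ip W (f a) (k' j) * ((\<Sum>i\<in>insert a R0. \<beta> i * f i x) / nn)"
        unfolding A_def using False
        by (simp add: left_diff_distrib sum_subtractf sum_distrib_left sum_divide_distrib mult.assoc)
      also have "(\<Sum>i\<in>insert a R0. (if i \<in> R0 then A' j i else 0) * f i x) = (\<Sum>i\<in>R0. A' j i * f i x)"
        using insert.hyps by simp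
      finally show ?thesis unfolding k_def using False dA[OF jR x] s_comb[OF x] by simp
    qed
  qed
  show ?case unfolding dualprop_def using P1 P2 by blast
qed

lemma dual_proj:
  assumes "finite W" "finite I" "dualprop W I f k A" "y \<in> W" "j \<in> I"
  shows "ip W (f j) (\<lambda>z. (if y = z then 1 else 0) - (\<Sum>i\<in>I. f i y * k i z)) = 0"
proof -
  have "ip W (f j) (\<lambda>z. \<Sum>i\<in>I. f i y * k i z) = (\<Sum>i\<in>I. f i y * ip W (f j) (k i))"
    by (rule ip_sum_cmult_right)
  also have "\<dots> = (\<Sum>i\<in>I. if j = i then f i y else 0)"
    using assms(3,5) unfolding dualprop_def by (intro sum.cong) auto
  also have "\<dots> = f j y" using assms(2,5) by (simp add: sum.delta')
  finally show ?thesis by (simp add: ip_diff_right ip_delta assms)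
qed

lemma dual_k_orth:
  assumes "dualprop W I f k A" "i \<in> I" "\<forall>l\<in>I. ip W (f l) d = 0"
  shows "ip W (k i) d = 0"
proof -
  have "ip W (k i) d = ip W d (k i)" by (simp add: ip_sym)
  also have "\<dots> = ip W d (\<lambda>x. \<Sum>l\<in>I. A i l * f l x)"
    using assms(1,2) unfolding dualprop_def by (intro ip_cong) auto
  also have "\<dots> = (\<Sum>l\<in>I. A i l * ip W d (f l))" by (rule ip_sum_cmult_right)
  also have "\<dots> = 0" using assms(3) by (simp add: ip_sym)
  finally show ?thesis .
qed

lemma dual_trace:
  assumes "finite W" "finite I" "dualprop W I f k A"
  shows "(\<Sum>y\<in>W. \<Sum>i\<in>I. f i y * k i y) = real (card I)"
proof -
  have "(\<Sum>y\<in>W. \<Sum>i\<in>I. f i y * k i y) = (\<Sum>i\<in>I. \<Sum>y\<in>W. f i y * k i y)" by (rule sum.swap)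
  also have "\<dots> = (\<Sum>i\<in>I. ip W (f i) (k i))" unfolding ip_def ..
  also have "\<dots> = (\<Sum>i\<in>I. 1)" using assms(3) unfolding dualprop_def by (intro sum.cong) auto
  finally show ?thesis by simp
qed

lemma card_bound:
  assumes "finite I" "finite W" "indepW W I f"
  shows "card I \<le> card W"
proof -
  obtain k A where d: "dualprop W I f k A" using dual_exists[OF assms] by blast
  define h where "h = (\<lambda>y z. \<Sum>i\<in>I. f i y * k i z)"
  have hle: "h y y \<le> 1" if y: "y \<in> W" for y
  proof -
    define d where "d = (\<lambda>z. (if y = z then 1 else 0) - h y z)"
    have od: "\<forall>l\<in>I. ip W (f l) d = 0"
      using dual_proj[OF assms(2,1) d y] unfolding d_def h_def by blast
    have kd: "ip W (k i) d = 0" if "i \<in> I" for i using dual_k_orth[OF d that od] .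
    have hd: "ip W d (h y) = 0"
    proof -
      have "ip W d (h y) = (\<Sum>i\<in>I. f i y * ip W d (k i))"
        unfolding h_def by (rule ip_sum_cmult_right)
      also have "\<dots> = 0" using kd by (simp add: ip_sym)
      finally show ?thesis .
    qed
    have "ip W d d = ip W d (\<lambda>z. if y = z then 1 else 0) - ip W d (h y)"
    proof -
      have dd: "d = (\<lambda>x. (if y = x then 1 else 0) - h y x)" by (simp add: d_def)
      show ?thesis by (subst (2) dd) (rule ip_diff_right)
    qed
    also have "\<dots> = d y" using hd ip_delta[OF assms(2) y] by simp
    finally have "0 \<le> d y" using ip_self_nonneg[of W d] by simp
    then show ?thesis unfolding d_def by simp
  qed
  have "real (card I) = (\<Sum>y\<in>W. h y y)" unfolding h_def using dual_trace[OF assms(2,1) d] by simp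
  also have "\<dots> \<le> (\<Sum>y\<in>W. 1)" using hle by (intro sum_mono) auto
  finally show ?thesis by simp
qed

lemma trace_count:
  assumes fin: "finite I" "finite W" and ind: "indepW W I f"
    and sig: "\<forall>i\<in>I. \<sigma> i \<in> I"
    and adj: "\<forall>i\<in>I. \<forall>z\<in>W. (\<Sum>y\<in>W. f i y * Pm y z) = f (\<sigma> i) z"
    and rig: "\<forall>u. (\<forall>i\<in>I. ip W (f i) u = 0) \<longrightarrow> (\<exists>a b. \<forall>y\<in>W. u y = a * t1 y + b * t2 y)"
    and o1: "\<forall>i\<in>I. ip W (f i) t1 = 0" and o2: "\<forall>i\<in>I. ip W (f i) t2 = 0"
    and o12: "ip W t1 t2 = 0" and n1: "ip W t1 t1 > 0" and n2: "ip W t2 t2 > 0"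
    and e1: "\<forall>y\<in>W. (\<Sum>z\<in>W. Pm y z * t1 z) = \<epsilon>1 * t1 y"
    and e2: "\<forall>y\<in>W. (\<Sum>z\<in>W. Pm y z * t2 z) = \<epsilon>2 * t2 y"
  shows "real (card {i\<in>I. \<sigma> i = i}) = (\<Sum>y\<in>W. Pm y y) - \<epsilon>1 - \<epsilon>2"
proof -
  obtain k A where d: "dualprop W I f k A" using dual_exists[OF fin(1,2) ind] by blast
  define N1 where "N1 = ip W t1 t1"
  define N2 where "N2 = ip W t2 t2"
  have H: "(\<Sum>i\<in>I. f i y * k i z) = (if y = z then 1 else 0) - t1 y * t1 z / N1 - t2 y * t2 z / N2"
    if y: "y \<in> W" and z: "z \<in> W" for y z
  proof -
    define u where "u = (\<lambda>z. (if y = z then 1 else 0) - (\<Sum>i\<in>I. f i y * k i z))"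
    have ou: "\<forall>l\<in>I. ip W (f l) u = 0"
      using dual_proj[OF fin(2,1) d y] unfolding u_def by blast
    obtain a b where ab: "\<forall>y\<in>W. u y = a * t1 y + b * t2 y" using rig ou by blast
    have kt1: "ip W (k i) t1 = 0" if "i \<in> I" for i using dual_k_orth[OF d that o1] .
    have kt2: "ip W (k i) t2 = 0" if "i \<in> I" for i using dual_k_orth[OF d that o2] .
    have ut: "ip W u t = t y" if "\<forall>i\<in>I. ip W (k i) t = 0" for t
    proof -
      have "ip W u t = ip W t u" by (simp add: ip_sym)
      also have "\<dots> = t y - (\<Sum>i\<in>I. f i y * ip W t (k i))"
        unfolding u_def by (simp add: ip_diff_right ip_delta fin y ip_sum_cmult_right)
      also have "(\<Sum>i\<in>I. f i y * ip W t (k i)) = 0" using that by (simp add: ip_sym)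
      finally show ?thesis by simp
    qed
    have lin: "ip W u t = a * ip W t1 t + b * ip W t2 t" for t
    proof -
      have "ip W u t = ip W t u" by (simp add: ip_sym)
      also have "\<dots> = ip W t (\<lambda>y. a * t1 y + b * t2 y)" using ab by (intro ip_cong) auto
      also have "\<dots> = a * ip W t1 t + b * ip W t2 t"
        by (simp add: ip_add_right ip_cmult_right ip_sym)
      finally show ?thesis .
    qed
    have "t1 y = a * N1" using ut[of t1] lin[of t1] kt1 o12 unfolding N1_def by (simp add: ip_sym)
    then have a: "a = t1 y / N1" using n1 unfolding N1_def by simp
    have "t2 y = b * N2" using ut[of t2] lin[of t2] kt2 o12 unfolding N2_def by (simp add: ip_sym)
    then have b: "b = t2 y / N2" using n2 unfolding N2_def by simp
    have "u z = t1 y / N1 * t1 z + t2 y / N2 * t2 z" using ab z a b by simp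
    then show ?thesis unfolding u_def by simp
  qed
  have "real (card {i\<in>I. \<sigma> i = i}) = (\<Sum>i\<in>I. if \<sigma> i = i then 1 else 0)"
    using fin(1) by (simp add: sum.If_cases Int_def)
  also have "\<dots> = (\<Sum>i\<in>I. ip W (f (\<sigma> i)) (k i))"
    using d sig unfolding dualprop_def by (intro sum.cong) auto
  also have "\<dots> = (\<Sum>i\<in>I. \<Sum>z\<in>W. (\<Sum>y\<in>W. f i y * Pm y z) * k i z)"
    unfolding ip_def using adj by (intro sum.cong) auto
  also have "\<dots> = (\<Sum>i\<in>I. \<Sum>z\<in>W. \<Sum>y\<in>W. Pm y z * (f i y * k i z))"
    by (simp add: sum_distrib_left sum_distrib_right mult_ac)
  also have "\<dots> = (\<Sum>z\<in>W. \<Sum>i\<in>I. \<Sum>y\<in>W. Pm y z * (f i y * k i z))" by (rule sum.swap)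
  also have "\<dots> = (\<Sum>z\<in>W. \<Sum>y\<in>W. \<Sum>i\<in>I. Pm y z * (f i y * k i z))"
    by (intro sum.cong refl) (rule sum.swap)
  also have "\<dots> = (\<Sum>z\<in>W. \<Sum>y\<in>W. Pm y z * ((if y = z then 1 else 0) - t1 y * t1 z / N1 - t2 y * t2 z / N2))"
    by (intro sum.cong refl) (simp add: sum_distrib_left[symmetric] H)
  also have "\<dots> = (\<Sum>y\<in>W. \<Sum>z\<in>W. Pm y z * ((if y = z then 1 else 0) - t1 y * t1 z / N1 - t2 y * t2 z / N2))"
    by (rule sum.swap)
  also have "\<dots> = (\<Sum>y\<in>W. Pm y y - t1 y * (\<Sum>z\<in>W. Pm y z * t1 z) / N1 - t2 y * (\<Sum>z\<in>W. Pm y z * t2 z) / N2)"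
  proof (intro sum.cong refl)
    fix y assume y: "y \<in> W"
    have "(\<Sum>z\<in>W. Pm y z * ((if y = z then 1 else 0) - t1 y * t1 z / N1 - t2 y * t2 z / N2))
       = (\<Sum>z\<in>W. (if y = z then Pm y z else 0)) - (\<Sum>z\<in>W. t1 y * (Pm y z * t1 z) / N1)
         - (\<Sum>z\<in>W. t2 y * (Pm y z * t2 z) / N2)"
    proof -
      have "\<And>z. Pm y z * ((if y = z then 1 else 0) - t1 y * t1 z / N1 - t2 y * t2 z / N2)
         = (if y = z then Pm y z else 0) - t1 y * (Pm y z * t1 z) / N1 - t2 y * (Pm y z * t2 z) / N2"
        by (simp add: algebra_simps)
      then show ?thesis by (simp add: sum_subtractf)
    qed
    also have "\<dots> = Pm y y - t1 y * (\<Sum>z\<in>W. Pm y z * t1 z) / N1 - t2 y * (\<Sum>z\<in>W. Pm y z * t2 z) / N2"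
      using y fin by (simp add: sum_divide_distrib[symmetric] sum_distrib_left[symmetric])
    finally show "(\<Sum>z\<in>W. Pm y z * ((if y = z then 1 else 0) - t1 y * t1 z / N1 - t2 y * t2 z / N2))
       = Pm y y - t1 y * (\<Sum>z\<in>W. Pm y z * t1 z) / N1 - t2 y * (\<Sum>z\<in>W. Pm y z * t2 z) / N2" .
  qed
  also have "\<dots> = (\<Sum>y\<in>W. Pm y y - \<epsilon>1 * (t1 y * t1 y) / N1 - \<epsilon>2 * (t2 y * t2 y) / N2)"
    using e1 e2 by (intro sum.cong refl) (simp add: mult_ac)
  also have "\<dots> = (\<Sum>y\<in>W. Pm y y) - \<epsilon>1 * N1 / N1 - \<epsilon>2 * N2 / N2"
    unfolding N1_def N2_def ip_def
    by (simp add: sum_subtractf sum_divide_distrib[symmetric] sum_distrib_left[symmetric])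
  also have "\<dots> = (\<Sum>y\<in>W. Pm y y) - \<epsilon>1 - \<epsilon>2" using n1 n2 unfolding N1_def N2_def by simp
  finally show ?thesis .
qed

lemma sum_Inl_Inr:
  assumes "finite A" "finite B"
  shows "(\<Sum>j\<in>Inl ` A \<union> Inr ` B. h j) = (\<Sum>a\<in>A. h (Inl a)) + (\<Sum>b\<in>B. h (Inr b))"
proof -
  have "(\<Sum>j\<in>Inl ` A \<union> Inr ` B. h j) = (\<Sum>j\<in>Inl ` A. h j) + (\<Sum>j\<in>Inr ` B. h j)"
    by (rule sum.union_disjoint) (use assms in auto)
  also have "(\<Sum>j\<in>Inl ` A. h j) = (\<Sum>a\<in>A. h (Inl a))" by (simp add: sum.reindex)
  also have "(\<Sum>j\<in>Inr ` B. h j) = (\<Sum>b\<in>B. h (Inr b))" by (simp add: sum.reindex)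
  finally show ?thesis .
qed

lemma card_Inl_Inr:
  assumes "finite A" "finite B"
  shows "card (Inl ` A \<union> Inr ` B) = card A + card B"
proof -
  have "card (Inl ` A \<union> Inr ` B) = card (Inl ` A :: ('a + 'b) set) + card (Inr ` B :: ('a + 'b) set)"
    using assms by (subst card_Un_disjoint) auto
  then show ?thesis by (simp add: card_image)
qed

lemma bound2:
  assumes fin: "finite I" "finite W" and ind: "indepW W I f"
    and o1: "\<forall>i\<in>I. ip W (f i) t1 = 0" and o2: "\<forall>i\<in>I. ip W (f i) t2 = 0"
    and o12: "ip W t1 t2 = 0" and n1: "ip W t1 t1 > 0" and n2: "ip W t2 t2 > 0"
  shows "card I + 2 \<le> card W"
proof -
  define g where "g = (\<lambda>j. case j of Inl i \<Rightarrow> f i | Inr b \<Rightarrow> if b then t1 else t2)"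
  define I2 where "I2 = Inl ` I \<union> Inr ` (UNIV :: bool set)"
  have fI2: "finite I2" unfolding I2_def using fin by simp
  have sumI2: "(\<Sum>j\<in>I2. c j * g j x) = (\<Sum>i\<in>I. c (Inl i) * f i x) + c (Inr True) * t1 x + c (Inr False) * t2 x"
    for c x
  proof -
    have "(\<Sum>j\<in>I2. c j * g j x) = (\<Sum>i\<in>I. c (Inl i) * g (Inl i) x) + (\<Sum>b\<in>UNIV. c (Inr b) * g (Inr b) x)"
      unfolding I2_def by (rule sum_Inl_Inr) (use fin in auto)
    then show ?thesis by (simp add: UNIV_bool g_def)
  qed
  have "indepW W I2 g"
    unfolding indepW_def
  proof (intro allI impI)
    fix c assume h: "\<forall>x\<in>W. (\<Sum>j\<in>I2. c j * g j x) = 0"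
    define F where "F = (\<lambda>x. (\<Sum>i\<in>I. c (Inl i) * f i x) + c (Inr True) * t1 x + c (Inr False) * t2 x)"
    have F0: "\<forall>x\<in>W. F x = 0" using h sumI2 unfolding F_def by simp
    have ipF: "ip W t F = c (Inr True) * ip W t t1 + c (Inr False) * ip W t t2" if "\<forall>i\<in>I. ip W (f i) t = 0" for t
    proof -
      have "ip W t F = (\<Sum>i\<in>I. c (Inl i) * ip W t (f i)) + c (Inr True) * ip W t t1 + c (Inr False) * ip W t t2"
        unfolding F_def by (simp add: ip_add_right ip_cmult_right ip_sum_cmult_right)
      then show ?thesis using that by (simp add: ip_sym)
    qed
    have z: "ip W t F = 0" for t using F0 by (simp add: ip_cong[of W F "\<lambda>_. 0"] ip_def)
    have cT: "c (Inr True) = 0" using ipF[OF o1] z[of t1] o12 n1 by (simp add: ip_sym)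
    have cF: "c (Inr False) = 0" using ipF[OF o2] z[of t2] o12 n2 by (simp add: ip_sym)
    have "\<forall>x\<in>W. (\<Sum>i\<in>I. c (Inl i) * f i x) = 0" using F0 cT cF unfolding F_def by simp
    then have "\<forall>i\<in>I. c (Inl i) = 0" using spec[OF ind[unfolded indepW_def], of "\<lambda>i. c (Inl i)"] by simp
    moreover have "c (Inr b) = 0" for b using cT cF by (cases b) auto
    ultimately show "\<forall>j\<in>I2. c j = 0" unfolding I2_def by auto
  qed
  then have "card I2 \<le> card W" using card_bound[OF fI2 fin(2)] by blast
  moreover have "card I2 = card I + 2" unfolding I2_def using fin by (simp add: card_Inl_Inr)
  ultimately show ?thesis by simp
qed

section \<open>The cylinder setting\<close>

definition J3 :: "real^3 \<Rightarrow> real^3" where "J3 x = vector [- (x$2), x$1, 0]"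
definition xy3 :: "real^3 \<Rightarrow> real^3" where "xy3 x = vector [x$1, x$2, 0]"
definition flat :: "('v \<Rightarrow> real^3) \<Rightarrow> 'v \<times> 3 \<Rightarrow> real" where "flat X = (\<lambda>(w,c). X w $ c)"
definition rowf :: "('v \<Rightarrow> real^3) \<Rightarrow> ('v set + 'v) \<Rightarrow> 'v \<times> 3 \<Rightarrow> real" where
  "rowf p i = (case i of Inl e \<Rightarrow> flat (edge_row p e) | Inr v \<Rightarrow> flat (vertex_row p v))"

lemma J3_comp: "J3 x $ 1 = - (x$2)" "J3 x $ 2 = x$1" "J3 x $ 3 = 0"
  unfolding J3_def by simp_all
lemma xy3_comp: "xy3 x $ 1 = x$1" "xy3 x $ 2 = x$2" "xy3 x $ 3 = 0"
  unfolding xy3_def by simp_all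
lemma e3_comp: "e3 $ 1 = 0" "e3 $ 2 = 0" "e3 $ 3 = 1"
  unfolding e3_def by simp_all

lemmas comp3 = J3_comp xy3_comp e3_comp vec_eq_iff forall_3 inner_vec_def sum_3

lemma J3_diff: "J3 x - J3 y = J3 (x - y)" by (simp add: comp3)
lemma J3_orth: "x \<bullet> J3 x = 0" by (simp add: comp3 algebra_simps)
lemma xy3_J3: "xy3 x \<bullet> J3 x = 0" by (simp add: comp3 algebra_simps)
lemma xy3_e3: "xy3 x \<bullet> e3 = 0" by (simp add: comp3)
lemma e3_J3: "e3 \<bullet> J3 x = 0" by (simp add: comp3)
lemma e3_e3: "e3 \<bullet> e3 = 1" by (simp add: comp3)
lemma J3_J3: "J3 x \<bullet> J3 x = (x$1)^2 + (x$2)^2" by (simp add: comp3 power2_eq_square)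

lemma ip_flat:
  assumes "finite V"
  shows "ip (V \<times> UNIV) (flat X) u = (\<Sum>w\<in>V. X w \<bullet> (\<chi> c. u (w,c)))"
  unfolding ip_def flat_def inner_vec_def sum.cartesian_product
  by (rule sum.cong) auto

lemma ip_flat2:
  assumes "finite V"
  shows "ip (V \<times> UNIV) (flat X) (flat Y) = (\<Sum>w\<in>V. X w \<bullet> Y w)"
  using ip_flat[OF assms, of X "flat Y"] unfolding flat_def by simp

lemma edge_row_pair:
  assumes "a \<noteq> b"
  shows "edge_row p {a,b} x = (if x = a then p a - p b else if x = b then p b - p a else 0)"
  using assms unfolding edge_row_def by (auto simp: insert_Diff_if)

lemma edge_sum:
  assumes "finite V" "a \<in> V" "b \<in> V" "a \<noteq> b"
  shows "(\<Sum>w\<in>V. edge_row p {a,b} w \<bullet> X w) = (p a - p b) \<bullet> (X a - X b)"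
proof -
  have "(\<Sum>w\<in>V. edge_row p {a,b} w \<bullet> X w) =
      (\<Sum>w\<in>V. (if w = a then (p a - p b) \<bullet> X a else 0) + (if w = b then (p b - p a) \<bullet> X b else 0))"
    using assms(4) by (intro sum.cong) (auto simp: edge_row_pair)
  also have "\<dots> = (p a - p b) \<bullet> X a + (p b - p a) \<bullet> X b"
    using assms by (simp add: sum.distrib)
  also have "\<dots> = (p a - p b) \<bullet> (X a - X b)"
    by (simp add: inner_diff_left inner_diff_right)
  finally show ?thesis .
qed

lemma vertex_sum:
  assumes "finite V" "v \<in> V"
  shows "(\<Sum>w\<in>V. vertex_row p v w \<bullet> X w) = xy3 (p v) \<bullet> X v"
proof -
  have "(\<Sum>w\<in>V. vertex_row p v w \<bullet> X w) = (\<Sum>w\<in>V. if w = v then xy3 (p v) \<bullet> X v else 0)"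
    unfolding vertex_row_def xy3_def by (intro sum.cong) auto
  then show ?thesis using assms by simp
qed

locale cylfw =
  fixes V :: "'v set" and E :: "'v set set" and p :: "'v \<Rightarrow> real^3"
  assumes cyl: "cyl_framework V E p" and ne: "V \<noteq> {}"
    and ind: "independent_fw V E p" and rig: "inf_rigid V E p"
begin

lemma sg: "simple_graph V E" using cyl unfolding cyl_framework_def by simp

lemma finV: "finite V" using sg unfolding simple_graph_def by simp

lemma edgeE: "e \<in> E \<Longrightarrow> \<exists>a b. e = {a,b} \<and> a \<noteq> b \<and> a \<in> V \<and> b \<in> V"
  using sg unfolding simple_graph_def by simp

lemma finE: "finite E"
proof -
  have "E \<subseteq> Pow V"
  proof
    fix e assume "e \<in> E"
    then obtain a b where "e = {a,b}" "a \<in> V" "b \<in> V" using edgeE by blast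
    then show "e \<in> Pow V" by simp
  qed
  then show ?thesis using finV finite_subset by blast
qed

lemma oncyl: "v \<in> V \<Longrightarrow> (p v $ 1)^2 + (p v $ 2)^2 = 1"
  using cyl unfolding cyl_framework_def on_cylinder_def by simp

lemma edge_row_out: "w \<notin> e \<Longrightarrow> edge_row p e w = 0"
  unfolding edge_row_def by simp

lemma indep_sub:
  assumes E0: "E0 \<subseteq> E" and V0: "V0 \<subseteq> V" and sub: "\<forall>e\<in>E0. e \<subseteq> V0"
  shows "indepW (V0 \<times> UNIV) (Inl ` E0 \<union> Inr ` V0) (rowf p)"
  unfolding indepW_def
proof (intro allI impI)
  fix c assume h: "\<forall>x\<in>V0 \<times> UNIV. (\<Sum>i\<in>Inl ` E0 \<union> Inr ` V0. c i * rowf p i x) = 0"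
  have fE0: "finite E0" using E0 finE finite_subset by blast
  have fV0: "finite V0" using V0 finV finite_subset by blast
  define ce where "ce = (\<lambda>e. if e \<in> E0 then c (Inl e) else 0)"
  define dv where "dv = (\<lambda>v. if v \<in> V0 then c (Inr v) else 0)"
  have key: "\<forall>w\<in>V. (\<Sum>e\<in>E. ce e *\<^sub>R edge_row p e w) + (\<Sum>v\<in>V. dv v *\<^sub>R vertex_row p v w) = 0"
  proof
    fix w assume wV: "w \<in> V"
    show "(\<Sum>e\<in>E. ce e *\<^sub>R edge_row p e w) + (\<Sum>v\<in>V. dv v *\<^sub>R vertex_row p v w) = 0"
      unfolding vec_eq_iff
    proof
      fix k
      have s1: "(\<Sum>e\<in>E. ce e * edge_row p e w $ k) = (\<Sum>e\<in>E0. c (Inl e) * edge_row p e w $ k)"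
      proof -
        have "(\<Sum>e\<in>E. ce e * edge_row p e w $ k) = (\<Sum>e\<in>E0. ce e * edge_row p e w $ k)"
          by (rule sum.mono_neutral_right) (use E0 finE in \<open>auto simp: ce_def\<close>)
        also have "\<dots> = (\<Sum>e\<in>E0. c (Inl e) * edge_row p e w $ k)"
          by (rule sum.cong) (auto simp: ce_def)
        finally show ?thesis .
      qed
      have s2: "(\<Sum>v\<in>V. dv v * vertex_row p v w $ k) = (\<Sum>v\<in>V0. c (Inr v) * vertex_row p v w $ k)"
      proof -
        have "(\<Sum>v\<in>V. dv v * vertex_row p v w $ k) = (\<Sum>v\<in>V0. dv v * vertex_row p v w $ k)"
          by (rule sum.mono_neutral_right) (use V0 finV in \<open>auto simp: dv_def\<close>)
        also have "\<dots> = (\<Sum>v\<in>V0. c (Inr v) * vertex_row p v w $ k)"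
          by (rule sum.cong) (auto simp: dv_def)
        finally show ?thesis .
      qed
      have s3: "(\<Sum>i\<in>Inl ` E0 \<union> Inr ` V0. c i * rowf p i (w,k)) =
          (\<Sum>e\<in>E0. c (Inl e) * edge_row p e w $ k) + (\<Sum>v\<in>V0. c (Inr v) * vertex_row p v w $ k)"
        by (subst sum_Inl_Inr[OF fE0 fV0]) (simp add: rowf_def flat_def)
      have s4: "(\<Sum>i\<in>Inl ` E0 \<union> Inr ` V0. c i * rowf p i (w,k)) = 0"
      proof (cases "w \<in> V0")
        case True
        then have "(w,k) \<in> V0 \<times> UNIV" by simp
        then show ?thesis using h by blast
      next
        case False
        have "(\<Sum>e\<in>E0. c (Inl e) * edge_row p e w $ k) = 0"
        proof (intro sum.neutral ballI)
          fix e assume "e \<in> E0"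
          then have "w \<notin> e" using False sub by blast
          then show "c (Inl e) * edge_row p e w $ k = 0" by (simp add: edge_row_out)
        qed
        moreover have "(\<Sum>v\<in>V0. c (Inr v) * vertex_row p v w $ k) = 0"
          using False by (intro sum.neutral) (auto simp: vertex_row_def)
        ultimately show ?thesis using s3 by simp
      qed
      show "((\<Sum>e\<in>E. ce e *\<^sub>R edge_row p e w) + (\<Sum>v\<in>V. dv v *\<^sub>R vertex_row p v w)) $ k = 0 $ k"
        using s1 s2 s3 s4 by simp
    qed
  qed
  have "(\<forall>e\<in>E. ce e = 0) \<and> (\<forall>v\<in>V. dv v = 0)"
    using spec[OF spec[OF ind[unfolded independent_fw_def], of ce], of dv] key by blast
  then have a1: "\<forall>e\<in>E0. c (Inl e) = 0" and a2: "\<forall>v\<in>V0. c (Inr v) = 0"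
    using E0 V0 unfolding ce_def dv_def by (metis subsetD)+
  then show "\<forall>i\<in>Inl ` E0 \<union> Inr ` V0. c i = 0" by auto
qed

definition t1 :: "'v \<times> 3 \<Rightarrow> real" where "t1 = flat (\<lambda>w. e3)"
definition t2 :: "'v \<times> 3 \<Rightarrow> real" where "t2 = flat (\<lambda>w. J3 (p w))"

lemma ortho_sub:
  assumes E0: "E0 \<subseteq> E" and V0: "V0 \<subseteq> V" and sub: "\<forall>e\<in>E0. e \<subseteq> V0"
    and i: "i \<in> Inl ` E0 \<union> Inr ` V0"
  shows "ip (V0 \<times> UNIV) (rowf p i) t1 = 0" "ip (V0 \<times> UNIV) (rowf p i) t2 = 0"
proof -
  have fV0: "finite V0" using V0 finV finite_subset by blast
  have "ip (V0 \<times> UNIV) (rowf p i) t1 = 0 \<and> ip (V0 \<times> UNIV) (rowf p i) t2 = 0"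
  proof (cases i)
    case (Inl e)
    then have eE: "e \<in> E0" using i by auto
    then have "e \<in> E" using E0 by blast
    then obtain a b where ab: "e = {a,b}" "a \<noteq> b" using edgeE by blast
    have abV: "a \<in> V0" "b \<in> V0" using sub eE ab by auto
    show ?thesis unfolding Inl rowf_def t1_def t2_def
      using ab abV fV0 by (simp add: ip_flat2 edge_sum J3_diff J3_orth)
  next
    case (Inr v)
    then have "v \<in> V0" using i by auto
    then show ?thesis unfolding Inr rowf_def t1_def t2_def
      using fV0 by (simp add: ip_flat2 vertex_sum xy3_J3 xy3_e3)
  qed
  then show "ip (V0 \<times> UNIV) (rowf p i) t1 = 0" "ip (V0 \<times> UNIV) (rowf p i) t2 = 0" by auto
qed

lemma norms_sub:
  assumes V0: "V0 \<subseteq> V" "V0 \<noteq> {}"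
  shows "ip (V0 \<times> UNIV) t1 t2 = 0" "ip (V0 \<times> UNIV) t1 t1 > 0" "ip (V0 \<times> UNIV) t2 t2 > 0"
proof -
  have fV0: "finite V0" using V0 finV finite_subset by blast
  have c0: "card V0 > 0" using fV0 V0 by (simp add: card_gt_0_iff)
  show "ip (V0 \<times> UNIV) t1 t2 = 0" unfolding t1_def t2_def using fV0 by (simp add: ip_flat2 e3_J3)
  show "ip (V0 \<times> UNIV) t1 t1 > 0" unfolding t1_def using fV0 c0 by (simp add: ip_flat2 e3_e3)
  have "ip (V0 \<times> UNIV) t2 t2 = (\<Sum>w\<in>V0. J3 (p w) \<bullet> J3 (p w))"
    unfolding t2_def using fV0 by (simp add: ip_flat2)
  also have "\<dots> = (\<Sum>w\<in>V0. 1)"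
  proof (rule sum.cong)
    fix w assume "w \<in> V0"
    then have "w \<in> V" using V0 by blast
    then show "J3 (p w) \<bullet> J3 (p w) = 1" using oncyl[of w] by (simp add: J3_J3 add.commute)
  qed simp
  finally have "ip (V0 \<times> UNIV) t2 t2 = (\<Sum>w\<in>V0. 1)" .
  then show "ip (V0 \<times> UNIV) t2 t2 > 0" using c0 by simp
qed

lemma rigid:
  "\<forall>u. (\<forall>i\<in>Inl ` E \<union> Inr ` V. ip (V \<times> UNIV) (rowf p i) u = 0) \<longrightarrow>
      (\<exists>a b. \<forall>y\<in>V \<times> UNIV. u y = a * t1 y + b * t2 y)"
proof (intro allI impI)
  fix u assume h: "\<forall>i\<in>Inl ` E \<union> Inr ` V. ip (V \<times> UNIV) (rowf p i) u = 0"
  define U where "U = (\<lambda>w. \<chi> c. u (w,c))"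
  have "in_kernel V E p U"
    unfolding in_kernel_def
  proof
    show "\<forall>e\<in>E. (\<Sum>w\<in>V. edge_row p e w \<bullet> U w) = 0"
    proof
      fix e assume "e \<in> E"
      then have "ip (V \<times> UNIV) (rowf p (Inl e)) u = 0" using h by blast
      then show "(\<Sum>w\<in>V. edge_row p e w \<bullet> U w) = 0" unfolding U_def rowf_def
        using finV by (simp add: ip_flat)
    qed
    show "\<forall>v\<in>V. (\<Sum>w\<in>V. vertex_row p v w \<bullet> U w) = 0"
    proof
      fix v assume "v \<in> V"
      then have "ip (V \<times> UNIV) (rowf p (Inr v)) u = 0" using h by blast
      then show "(\<Sum>w\<in>V. vertex_row p v w \<bullet> U w) = 0" unfolding U_def rowf_def
        using finV by (simp add: ip_flat)
    qed
  qed
  then obtain a b where ab: "\<forall>w\<in>V. U w = vector [0, 0, a] + b *\<^sub>R vector [- (p w $ 2), p w $ 1, 0]"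
    using rig unfolding inf_rigid_def trivial_motion_def by blast
  have "u y = a * t1 y + b * t2 y" if "y \<in> V \<times> UNIV" for y
  proof -
    obtain w c where y0: "y = (w,c)" by (cases y)
    have y: "y = (w,c)" "w \<in> V" using y0 that by auto
    have "u (w,c) = U w $ c" unfolding U_def by simp
    also have "\<dots> = (vector [0, 0, a] + b *\<^sub>R vector [- (p w $ 2), p w $ 1, 0] :: real^3) $ c"
      using ab y by simp
    also have "\<dots> = a * e3 $ c + b * J3 (p w) $ c"
      using exhaust_3[of c] by (auto simp: e3_def J3_def)
    finally show ?thesis unfolding y t1_def t2_def flat_def by simp
  qed
  then show "\<exists>a b. \<forall>y\<in>V \<times> UNIV. u y = a * t1 y + b * t2 y" by blast
qed

lemma sparse: "sparse22 V E"
  unfolding sparse22_def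
proof (intro allI impI)
  fix V' E' assume h: "V' \<noteq> {} \<and> V' \<subseteq> V \<and> E' \<subseteq> E \<and> (\<forall>e\<in>E'. e \<subseteq> V')"
  have fV0: "finite V'" using h finV finite_subset by blast
  have fE0: "finite E'" using h finE finite_subset by blast
  have hh: "E' \<subseteq> E" "V' \<subseteq> V" "\<forall>e\<in>E'. e \<subseteq> V'" "V' \<noteq> {}" using h by auto
  have fI: "finite (Inl ` E' \<union> Inr ` V')" using fV0 fE0 by simp
  have fW: "finite (V' \<times> (UNIV :: 3 set))" using fV0 by simp
  have o1: "\<forall>i\<in>Inl ` E' \<union> Inr ` V'. ip (V' \<times> UNIV) (rowf p i) t1 = 0"
    using ortho_sub(1)[OF hh(1,2,3)] by blast
  have o2: "\<forall>i\<in>Inl ` E' \<union> Inr ` V'. ip (V' \<times> UNIV) (rowf p i) t2 = 0"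
    using ortho_sub(2)[OF hh(1,2,3)] by blast
  have "card (Inl ` E' \<union> Inr ` V') + 2 \<le> card (V' \<times> (UNIV :: 3 set))"
    by (rule bound2[OF fI fW indep_sub[OF hh(1,2,3)] o1 o2 norms_sub[OF hh(2,4)]])
  then have "card E' + card V' + 2 \<le> 3 * card V'"
    using fV0 fE0 by (simp add: card_Inl_Inr card_cartesian_product)
  then show "int (card E') \<le> 2 * int (card V') - 2" by linarith
qed


definition rf :: "('v set + 'v) \<Rightarrow> 'v \<Rightarrow> real^3" where
  "rf i = (case i of Inl e \<Rightarrow> edge_row p e | Inr v \<Rightarrow> vertex_row p v)"

lemma rowf_rf: "rowf p i = flat (rf i)"
  unfolding rowf_def rf_def by (cases i) auto

lemma sum_prod3: "(\<Sum>z\<in>A \<times> B. h z) = (\<Sum>x\<in>A. \<Sum>y\<in>B. h (x,y))"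
  unfolding sum.cartesian_product by simp

context
  fixes F :: "'v \<Rightarrow> 'v" and M :: "real^3^3" and \<epsilon>1 \<epsilon>2 :: real
  assumes FV: "\<forall>v\<in>V. F v \<in> V" and FF: "\<forall>v\<in>V. F (F v) = v"
    and FE: "\<forall>a\<in>V. \<forall>b\<in>V. {a,b} \<in> E \<longrightarrow> {F a, F b} \<in> E"
    and pF: "\<forall>v\<in>V. p (F v) = M *v p v"
    and Msym: "transpose M = M" and Mxy: "\<forall>x. M *v xy3 x = xy3 (M *v x)"
    and Me3: "M *v e3 = \<epsilon>1 *\<^sub>R e3" and MJ: "\<forall>x. M *v J3 (M *v x) = \<epsilon>2 *\<^sub>R J3 x"
begin

definition sg :: "('v set + 'v) \<Rightarrow> ('v set + 'v)" where
  "sg i = (case i of Inl e \<Rightarrow> Inl (F ` e) | Inr v \<Rightarrow> Inr (F v))"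

definition Pm :: "'v \<times> 3 \<Rightarrow> 'v \<times> 3 \<Rightarrow> real" where
  "Pm y z = (if fst z = F (fst y) then M $ snd y $ snd z else 0)"

lemma F_iff: "w \<in> V \<Longrightarrow> w' \<in> V \<Longrightarrow> (w' = F w) \<longleftrightarrow> (w = F w')"
  using FF by auto

lemma Msym': "M $ i $ j = M $ j $ i"
proof -
  have "transpose M $ j $ i = M $ j $ i" using Msym by simp
  then show ?thesis by (simp add: transpose_def)
qed

lemma Papply:
  assumes "w \<in> V"
  shows "(\<Sum>z\<in>V \<times> UNIV. Pm (w,c) z * flat X z) = (M *v X (F w)) $ c"
proof -
  have "(\<Sum>z\<in>V \<times> UNIV. Pm (w,c) z * flat X z)
      = (\<Sum>w'\<in>V. \<Sum>c'\<in>UNIV. Pm (w,c) (w',c') * flat X (w',c'))" by (rule sum_prod3)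
  also have "\<dots> = (\<Sum>w'\<in>V. if w' = F w then (\<Sum>c'\<in>UNIV. M $ c $ c' * X w' $ c') else 0)"
    unfolding Pm_def flat_def by (intro sum.cong) auto
  also have "\<dots> = (\<Sum>c'\<in>UNIV. M $ c $ c' * X (F w) $ c')"
    using FV assms finV by simp
  finally show ?thesis by (simp add: matrix_vector_mult_def)
qed

lemma Padj:
  assumes "w' \<in> V"
  shows "(\<Sum>y\<in>V \<times> UNIV. flat X y * Pm y (w',c')) = (M *v X (F w')) $ c'"
proof -
  have "(\<Sum>y\<in>V \<times> UNIV. flat X y * Pm y (w',c'))
      = (\<Sum>w\<in>V. \<Sum>c\<in>UNIV. flat X (w,c) * Pm (w,c) (w',c'))" by (rule sum_prod3)
  also have "\<dots> = (\<Sum>w\<in>V. if w = F w' then (\<Sum>c\<in>UNIV. M $ c' $ c * X w $ c) else 0)"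
  proof (intro sum.cong refl)
    fix w assume w: "w \<in> V"
    show "(\<Sum>c\<in>UNIV. flat X (w,c) * Pm (w,c) (w',c')) =
        (if w = F w' then (\<Sum>c\<in>UNIV. M $ c' $ c * X w $ c) else 0)"
      unfolding Pm_def flat_def using F_iff[OF w assms] Msym' by (auto simp: mult.commute)
  qed
  also have "\<dots> = (\<Sum>c\<in>UNIV. M $ c' $ c * X (F w') $ c)"
    using FV assms finV by simp
  finally show ?thesis by (simp add: matrix_vector_mult_def)
qed

lemma row_equiv:
  assumes i: "i \<in> Inl ` E \<union> Inr ` V" and w': "w' \<in> V"
  shows "M *v rf i (F w') = rf (sg i) w'"
proof (cases i)
  case (Inl e)
  then have "e \<in> E" using i by auto
  then obtain a b where ab: "e = {a,b}" "a \<noteq> b" "a \<in> V" "b \<in> V" using edgeE by blast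
  have Fab: "F a \<noteq> F b" using FF ab by metis
  have sgi: "sg (Inl {a,b}) = Inl {F a, F b}" unfolding sg_def by simp
  show ?thesis
  proof (cases "F w' = a")
    case True
    then have "w' = F a" using FF w' by metis
    then show ?thesis unfolding Inl ab sgi rf_def using True ab Fab pF
      by (simp add: edge_row_pair matrix_vector_mult_diff_distrib)
  next
    case False
    show ?thesis
    proof (cases "F w' = b")
      case True
      then have "w' = F b" using FF w' by metis
      then show ?thesis unfolding Inl ab sgi rf_def using True ab Fab pF
        by (simp add: edge_row_pair matrix_vector_mult_diff_distrib)
    next
      case False2: False
      have "w' \<noteq> F a" "w' \<noteq> F b" using False False2 FF ab by auto
      then show ?thesis unfolding Inl ab sgi rf_def using False False2 ab Fab
        by (simp add: edge_row_pair)
    qed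
  qed
next
  case (Inr v)
  then have v: "v \<in> V" using i by auto
  have "F w' = v \<longleftrightarrow> w' = F v" using F_iff[OF v w'] by auto
  moreover have "vertex_row p v x = (if x = v then xy3 (p v) else 0)" for v x
    unfolding vertex_row_def xy3_def by simp
  ultimately show ?thesis unfolding Inr rf_def sg_def using Mxy pF v by auto
qed

lemma fixed_edge_iff:
  assumes "e \<in> E"
  shows "F ` e = e \<longleftrightarrow> e \<in> fixed_edges E F"
proof -
  obtain a b where ab: "e = {a,b}" "a \<noteq> b" "a \<in> V" "b \<in> V" using edgeE assms by blast
  show ?thesis
  proof
    assume "F ` e = e"
    then have "{F a, F b} = {a, b}" using ab by simp
    then have "(F a = a \<and> F b = b) \<or> (F a = b \<and> F b = a)" by (simp add: doubleton_eq_iff)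
    then show "e \<in> fixed_edges E F" unfolding fixed_edges_def using assms ab by blast
  next
    assume "e \<in> fixed_edges E F"
    then obtain u v where uv: "e = {u,v}" "(F u = u \<and> F v = v) \<or> (F u = v \<and> F v = u)"
      unfolding fixed_edges_def by blast
    then show "F ` e = e" by auto
  qed
qed

lemma count:
  "real (card (fixed_edges E F) + card (fixed_vertices V F)) =
     real (card (fixed_vertices V F)) * (\<Sum>c\<in>UNIV. M $ c $ c) - \<epsilon>1 - \<epsilon>2"
proof -
  define W where "W = V \<times> (UNIV :: 3 set)"
  define I where "I = Inl ` E \<union> Inr ` V"
  have finW: "finite W" unfolding W_def using finV by simp
  have finI: "finite I" unfolding I_def using finV finE by simp
  have sgI: "\<forall>i\<in>I. sg i \<in> I"
  proof
    fix i assume i: "i \<in> I"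
    show "sg i \<in> I"
    proof (cases i)
      case (Inl e)
      then have "e \<in> E" using i unfolding I_def by auto
      then obtain a b where ab: "e = {a,b}" "a \<noteq> b" "a \<in> V" "b \<in> V" using edgeE by blast
      then have "{F a, F b} \<in> E" using FE \<open>e \<in> E\<close> by blast
      then show ?thesis unfolding Inl sg_def I_def ab by simp
    next
      case (Inr v)
      then show ?thesis using i FV unfolding I_def sg_def by auto
    qed
  qed
  have adj: "\<forall>i\<in>I. \<forall>z\<in>W. (\<Sum>y\<in>W. rowf p i y * Pm y z) = rowf p (sg i) z"
  proof (intro ballI)
    fix i z assume i: "i \<in> I" and z: "z \<in> W"
    obtain w' c' where wc: "z = (w',c')" "w' \<in> V" using z unfolding W_def by (cases z) auto
    show "(\<Sum>y\<in>W. rowf p i y * Pm y z) = rowf p (sg i) z"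
      unfolding W_def wc rowf_rf Padj[OF wc(2)] row_equiv[OF i[unfolded I_def] wc(2)]
      by (simp add: flat_def)
  qed
  have e1: "\<forall>y\<in>W. (\<Sum>z\<in>W. Pm y z * t1 z) = \<epsilon>1 * t1 y"
  proof
    fix y assume y: "y \<in> W"
    obtain w c where wc: "y = (w,c)" "w \<in> V" using y unfolding W_def by (cases y) auto
    show "(\<Sum>z\<in>W. Pm y z * t1 z) = \<epsilon>1 * t1 y"
      unfolding W_def wc t1_def Papply[OF wc(2)] using Me3 by (simp add: flat_def)
  qed
  have e2: "\<forall>y\<in>W. (\<Sum>z\<in>W. Pm y z * t2 z) = \<epsilon>2 * t2 y"
  proof
    fix y assume y: "y \<in> W"
    obtain w c where wc: "y = (w,c)" "w \<in> V" using y unfolding W_def by (cases y) auto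
    show "(\<Sum>z\<in>W. Pm y z * t2 z) = \<epsilon>2 * t2 y"
      unfolding W_def wc t2_def Papply[OF wc(2)] using MJ pF wc(2) by (simp add: flat_def)
  qed
  have tc: "real (card {i\<in>I. sg i = i}) = (\<Sum>y\<in>W. Pm y y) - \<epsilon>1 - \<epsilon>2"
  proof -
    have EV: "\<forall>e\<in>E. e \<subseteq> V"
    proof
      fix e assume "e \<in> E"
      then obtain a b where "e = {a,b}" "a \<in> V" "b \<in> V" using edgeE by blast
      then show "e \<subseteq> V" by simp
    qed
    have ind': "indepW W I (rowf p)"
      using indep_sub[OF subset_refl subset_refl EV] unfolding I_def W_def .
    have o1: "\<forall>i\<in>I. ip W (rowf p i) t1 = 0"
      using ortho_sub(1)[OF subset_refl subset_refl EV] unfolding I_def W_def by blast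
    have o2: "\<forall>i\<in>I. ip W (rowf p i) t2 = 0"
      using ortho_sub(2)[OF subset_refl subset_refl EV] unfolding I_def W_def by blast
    have rig': "\<forall>u. (\<forall>i\<in>I. ip W (rowf p i) u = 0) \<longrightarrow> (\<exists>a b. \<forall>y\<in>W. u y = a * t1 y + b * t2 y)"
      using rigid unfolding I_def W_def .
    show ?thesis
      by (rule trace_count[OF finI finW ind' sgI adj rig' o1 o2 norms_sub[OF subset_refl ne, folded W_def] e1 e2])
  qed
  have tr: "(\<Sum>y\<in>W. Pm y y) = real (card (fixed_vertices V F)) * (\<Sum>c\<in>UNIV. M $ c $ c)"
  proof -
    have "(\<Sum>y\<in>W. Pm y y) = (\<Sum>w\<in>V. \<Sum>c\<in>UNIV. Pm (w,c) (w,c))" unfolding W_def by (rule sum_prod3)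
    also have "\<dots> = (\<Sum>w\<in>V. if F w = w then (\<Sum>c\<in>UNIV. M $ c $ c) else 0)"
      unfolding Pm_def by (intro sum.cong) auto
    also have "\<dots> = real (card (fixed_vertices V F)) * (\<Sum>c\<in>UNIV. M $ c $ c)"
      using finV by (simp add: sum.If_cases fixed_vertices_def Int_def)
    finally show ?thesis .
  qed
  have fx: "{i\<in>I. sg i = i} = Inl ` fixed_edges E F \<union> Inr ` fixed_vertices V F"
  proof -
    have "i \<in> {i\<in>I. sg i = i} \<longleftrightarrow> i \<in> Inl ` fixed_edges E F \<union> Inr ` fixed_vertices V F" for i
    proof (cases i)
      case (Inl e)
      have "i \<in> {i\<in>I. sg i = i} \<longleftrightarrow> e \<in> E \<and> F ` e = e"
        unfolding Inl I_def sg_def by auto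
      also have "\<dots> \<longleftrightarrow> e \<in> fixed_edges E F"
        using fixed_edge_iff unfolding fixed_edges_def by blast
      finally show ?thesis unfolding Inl by auto
    next
      case (Inr v)
      show ?thesis unfolding Inr I_def sg_def fixed_vertices_def by auto
    qed
    then show ?thesis by blast
  qed
  have fin2: "finite (fixed_edges E F)" "finite (fixed_vertices V F)"
    using finE finV unfolding fixed_edges_def fixed_vertices_def by auto
  have "card {i\<in>I. sg i = i} = card (fixed_edges E F) + card (fixed_vertices V F)"
    unfolding fx using fin2 by (rule card_Inl_Inr)
  then show ?thesis using tc tr by simp
qed

end

end


section \<open>Concrete symmetry matrices\<close>

lemma refl_act: "refl_mat n *v x = x - (2 * (n \<bullet> x)) *\<^sub>R n"
  by (simp add: vec_eq_iff forall_3 sum_3 refl_mat_def outer_def mat_def matrix_vector_mult_def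
      inner_vec_def algebra_simps)

lemma half_act: "halfturn_mat a *v x = (2 * (a \<bullet> x)) *\<^sub>R a - x"
  by (simp add: vec_eq_iff forall_3 sum_3 halfturn_mat_def outer_def mat_def matrix_vector_mult_def
      inner_vec_def algebra_simps)

lemma inv_act: "inversion *v x = - x"
  by (simp add: vec_eq_iff forall_3 sum_3 inversion_def mat_def matrix_vector_mult_def)

definition good :: "real^3^3 \<Rightarrow> real \<Rightarrow> real \<Rightarrow> bool" where
  "good M \<epsilon>1 \<epsilon>2 \<longleftrightarrow> transpose M = M \<and> (\<forall>x. M *v xy3 x = xy3 (M *v x)) \<and>
     M *v e3 = \<epsilon>1 *\<^sub>R e3 \<and> (\<forall>x. M *v J3 (M *v x) = \<epsilon>2 *\<^sub>R J3 x)"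

definition tr3 :: "real^3^3 \<Rightarrow> real" where "tr3 M = (\<Sum>c\<in>UNIV. M $ c $ c)"

lemma unit_h: "norm (n::real^3) = 1 \<Longrightarrow> n $ 3 = 0 \<Longrightarrow> n$1 * n$1 + n$2 * n$2 = 1"
  by (simp add: norm_eq_1 inner_vec_def sum_3)

lemma good_refl:
  assumes "norm n = 1" "n $ 3 = 0"
  shows "good (refl_mat n) 1 (-1)" "tr3 (refl_mat n) = 1"
proof -
  have u: "n$1 * n$1 + n$2 * n$2 = 1" using unit_h[OF assms] .
  have "transpose (refl_mat n) = refl_mat n"
    by (simp add: vec_eq_iff forall_3 refl_mat_def outer_def mat_def transpose_def)
  moreover have "\<forall>x. refl_mat n *v xy3 x = xy3 (refl_mat n *v x)"
    using assms(2) by (simp add: refl_act comp3 algebra_simps)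
  moreover have "refl_mat n *v e3 = 1 *\<^sub>R e3"
    using assms(2) by (simp add: refl_act comp3)
  moreover have "\<forall>x. refl_mat n *v J3 (refl_mat n *v x) = (-1) *\<^sub>R J3 x"
  proof
    fix x :: "real^3"
    show "refl_mat n *v J3 (refl_mat n *v x) = (-1) *\<^sub>R J3 x"
      using assms(2) by (simp add: refl_act comp3) (use u in algebra)
  qed
  ultimately show "good (refl_mat n) 1 (-1)" unfolding good_def by blast
  show "tr3 (refl_mat n) = 1" using u assms(2)
    by (simp add: tr3_def sum_3 refl_mat_def outer_def mat_def)
qed

lemma good_half:
  assumes "norm n = 1" "n $ 3 = 0"
  shows "good (halfturn_mat n) (-1) (-1)" "tr3 (halfturn_mat n) = -1"
proof -
  have u: "n$1 * n$1 + n$2 * n$2 = 1" using unit_h[OF assms] .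
  have "transpose (halfturn_mat n) = halfturn_mat n"
    by (simp add: vec_eq_iff forall_3 halfturn_mat_def outer_def mat_def transpose_def)
  moreover have "\<forall>x. halfturn_mat n *v xy3 x = xy3 (halfturn_mat n *v x)"
    using assms(2) by (simp add: half_act comp3 algebra_simps)
  moreover have "halfturn_mat n *v e3 = (-1) *\<^sub>R e3"
    using assms(2) by (simp add: half_act comp3)
  moreover have "\<forall>x. halfturn_mat n *v J3 (halfturn_mat n *v x) = (-1) *\<^sub>R J3 x"
  proof
    fix x :: "real^3"
    show "halfturn_mat n *v J3 (halfturn_mat n *v x) = (-1) *\<^sub>R J3 x"
      using assms(2) by (simp add: half_act comp3) (use u in algebra)
  qed
  ultimately show "good (halfturn_mat n) (-1) (-1)" unfolding good_def by blast
  show "tr3 (halfturn_mat n) = -1" using u assms(2)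
    by (simp add: tr3_def sum_3 halfturn_mat_def outer_def mat_def)
qed

lemma good_sigma': "good sigma' (-1) 1" "tr3 sigma' = 1"
proof -
  have n: "norm e3 = 1" by (simp add: norm_eq_1 e3_e3)
  have "transpose sigma' = sigma'"
    by (simp add: vec_eq_iff forall_3 sigma'_def refl_mat_def outer_def mat_def transpose_def)
  moreover have "\<forall>x. sigma' *v xy3 x = xy3 (sigma' *v x)"
    by (simp add: sigma'_def refl_act comp3)
  moreover have "sigma' *v e3 = (-1) *\<^sub>R e3"
    by (simp add: sigma'_def refl_act comp3)
  moreover have "\<forall>x. sigma' *v J3 (sigma' *v x) = 1 *\<^sub>R J3 x"
    by (simp add: sigma'_def refl_act comp3)
  ultimately show "good sigma' (-1) 1" unfolding good_def by blast
  show "tr3 sigma' = 1" by (simp add: tr3_def sum_3 sigma'_def refl_mat_def outer_def mat_def e3_comp)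
qed

lemma good_inv: "good inversion (-1) 1" "tr3 inversion = -3"
proof -
  have "transpose inversion = inversion"
    by (simp add: vec_eq_iff forall_3 inversion_def mat_def transpose_def)
  then show "good inversion (-1) 1" unfolding good_def
    by (simp add: inv_act comp3)
  show "tr3 inversion = -3" by (simp add: inversion_def tr3_def sum_3 mat_def)
qed

lemma good_id: "good (mat 1) 1 1" "tr3 (mat 1) = 3"
  unfolding good_def by (simp, simp add: tr3_def sum_3 mat_def)



locale thmset =
  fixes \<Gamma> :: "('g, 'b) monoid_scheme" and V :: "'v set" and E :: "'v set set"
    and \<phi> :: "'g \<Rightarrow> 'v \<Rightarrow> 'v" and \<tau> :: "'g \<Rightarrow> real^3^3" and p :: "'v \<Rightarrow> real^3"
  assumes grp: "group \<Gamma>" and ne: "V \<noteq> {}" and ah: "aut_hom \<Gamma> V E \<phi>"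
    and orth: "orth_rep \<Gamma> \<tau>" and cyl: "cyl_framework V E p"
    and sym: "symmetric_fw \<Gamma> V \<phi> \<tau> p" and iso: "isostatic V E p"
begin

lemma cf: "cylfw V E p"
  using cyl ne iso unfolding cylfw_def isostatic_def by simp

lemma tau_mult: "g \<in> carrier \<Gamma> \<Longrightarrow> h \<in> carrier \<Gamma> \<Longrightarrow> \<tau> (g \<otimes>\<^bsub>\<Gamma>\<^esub> h) = \<tau> g ** \<tau> h"
  using orth unfolding orth_rep_def by blast

lemma tau_orth: "g \<in> carrier \<Gamma> \<Longrightarrow> transpose (\<tau> g) ** \<tau> g = mat 1"
  using orth unfolding orth_rep_def orthogonal_matrix_def by blast

lemma tau_inj: "inj_on \<tau> (carrier \<Gamma>)"
  using orth unfolding orth_rep_def by blast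

lemma one_c: "\<one>\<^bsub>\<Gamma>\<^esub> \<in> carrier \<Gamma>" using grp by (simp add: group.is_monoid monoid.one_closed)

lemma m_c: "g \<in> carrier \<Gamma> \<Longrightarrow> h \<in> carrier \<Gamma> \<Longrightarrow> g \<otimes>\<^bsub>\<Gamma>\<^esub> h \<in> carrier \<Gamma>"
  using grp by (simp add: group.is_monoid monoid.m_closed)

lemma tau_one: "\<tau> \<one>\<^bsub>\<Gamma>\<^esub> = mat 1"
proof -
  let ?T = "\<tau> \<one>\<^bsub>\<Gamma>\<^esub>"
  have "?T = ?T ** ?T"
    using tau_mult[OF one_c one_c] grp by (simp add: group.is_monoid monoid.l_one[OF _ one_c])
  then have "transpose ?T ** ?T = (transpose ?T ** ?T) ** ?T"
    by (metis matrix_mul_assoc)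
  then show ?thesis using tau_orth[OF one_c] by simp
qed

lemma gaut: "g \<in> carrier \<Gamma> \<Longrightarrow> graph_aut V E (\<phi> g)"
  using ah unfolding aut_hom_def by blast

lemma phi_mult: "g \<in> carrier \<Gamma> \<Longrightarrow> h \<in> carrier \<Gamma> \<Longrightarrow> v \<in> V \<Longrightarrow> \<phi> (g \<otimes>\<^bsub>\<Gamma>\<^esub> h) v = \<phi> g (\<phi> h v)"
  using ah unfolding aut_hom_def by blast

lemma phiV: "g \<in> carrier \<Gamma> \<Longrightarrow> v \<in> V \<Longrightarrow> \<phi> g v \<in> V"
  using gaut unfolding graph_aut_def by (meson bij_betw_apply)

lemma phi_one: "v \<in> V \<Longrightarrow> \<phi> \<one>\<^bsub>\<Gamma>\<^esub> v = v"
proof -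
  assume v: "v \<in> V"
  have inj: "inj_on (\<phi> \<one>\<^bsub>\<Gamma>\<^esub>) V" using gaut[OF one_c] unfolding graph_aut_def bij_betw_def by blast
  have "\<phi> \<one>\<^bsub>\<Gamma>\<^esub> (\<phi> \<one>\<^bsub>\<Gamma>\<^esub> v) = \<phi> \<one>\<^bsub>\<Gamma>\<^esub> v"
    using phi_mult[OF one_c one_c v] grp by (simp add: group.is_monoid monoid.l_one[OF _ one_c])
  then show ?thesis using inj_onD[OF inj] phiV[OF one_c v] v by blast
qed

lemma invol:
  assumes g: "g \<in> carrier \<Gamma>" and sy: "transpose (\<tau> g) = \<tau> g" and v: "v \<in> V"
  shows "\<phi> g (\<phi> g v) = v"
proof -
  have "\<tau> (g \<otimes>\<^bsub>\<Gamma>\<^esub> g) = \<tau> \<one>\<^bsub>\<Gamma>\<^esub>"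
    using tau_mult[OF g g] tau_orth[OF g] sy tau_one by simp
  then have "g \<otimes>\<^bsub>\<Gamma>\<^esub> g = \<one>\<^bsub>\<Gamma>\<^esub>" using inj_onD[OF tau_inj] m_c[OF g g] one_c by blast
  then show ?thesis using phi_mult[OF g g v] phi_one[OF v] by simp
qed

lemma count_g:
  assumes g: "g \<in> carrier \<Gamma>" and gd: "good (\<tau> g) \<epsilon>1 \<epsilon>2"
  shows "real (card (fixed_edges E (\<phi> g)) + card (fixed_vertices V (\<phi> g))) =
     real (card (fixed_vertices V (\<phi> g))) * tr3 (\<tau> g) - \<epsilon>1 - \<epsilon>2"
proof -
  have sy: "transpose (\<tau> g) = \<tau> g" using gd unfolding good_def by blast
  have FE: "\<forall>a\<in>V. \<forall>b\<in>V. {a,b} \<in> E \<longrightarrow> {\<phi> g a, \<phi> g b} \<in> E"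
    using gaut[OF g] unfolding graph_aut_def by blast
  have pF: "\<forall>v\<in>V. p (\<phi> g v) = \<tau> g *v p v"
    using sym g unfolding symmetric_fw_def by simp
  show ?thesis unfolding tr3_def
    by (rule cylfw.count[OF cf]) (use phiV[OF g] invol[OF g sy] FE pF gd in \<open>auto simp: good_def\<close>)
qed

lemma finFE: "finite (fixed_edges E F)"
  using cylfw.finE[OF cf] unfolding fixed_edges_def by simp

lemma finFV: "finite (fixed_vertices V F)"
  using cylfw.finV[OF cf] unfolding fixed_vertices_def by simp

lemma noedge:
  assumes g: "g \<in> carrier \<Gamma>" and gd: "good (\<tau> g) \<epsilon>1 \<epsilon>2" and t: "tr3 (\<tau> g) = 1" and e: "\<epsilon>1 + \<epsilon>2 = 0"
  shows "fixed_edges E (\<phi> g) = {}"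
proof -
  have "card (fixed_edges E (\<phi> g)) = 0" using count_g[OF g gd] t e by simp
  then show ?thesis using finFE by simp
qed

lemma noedge_inv:
  assumes g: "g \<in> carrier \<Gamma>" and t: "\<tau> g = inversion"
  shows "fixed_edges E (\<phi> g) = {}"
proof -
  have "card (fixed_edges E (\<phi> g)) = 0" using count_g[OF g, of "-1" 1] good_inv t by simp
  then show ?thesis using finFE by simp
qed

lemma half:
  assumes g: "g \<in> carrier \<Gamma>" and t: "\<tau> g = halfturn_mat n" and n: "norm n = 1" "n $ 3 = 0"
  shows "(card (fixed_edges E (\<phi> g)) = 2 \<and> fixed_vertices V (\<phi> g) = {}) \<or>
         (fixed_edges E (\<phi> g) = {} \<and> card (fixed_vertices V (\<phi> g)) = 1)"
proof -
  have "real (card (fixed_edges E (\<phi> g)) + card (fixed_vertices V (\<phi> g))) =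
     real (card (fixed_vertices V (\<phi> g))) * (-1) - (-1) - (-1)"
    using count_g[OF g, of "-1" "-1"] good_half[OF n] t by simp
  then have "card (fixed_edges E (\<phi> g)) + 2 * card (fixed_vertices V (\<phi> g)) = 2" by linarith
  then have "(card (fixed_edges E (\<phi> g)) = 2 \<and> card (fixed_vertices V (\<phi> g)) = 0) \<or>
         (card (fixed_edges E (\<phi> g)) = 0 \<and> card (fixed_vertices V (\<phi> g)) = 1)"
    by (cases "card (fixed_vertices V (\<phi> g))") auto
  then show ?thesis using finFE finFV by auto
qed

lemma c2h_extra:
  assumes g: "g \<in> carrier \<Gamma>" and t: "\<tau> g = halfturn_mat n" and n: "norm n = 1" "n $ 3 = 0"
    and s: "s \<in> carrier \<Gamma>" and ts: "\<tau> s = refl_mat n"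
  shows "card (fixed_vertices V (\<phi> g)) \<noteq> 1"
proof
  assume "card (fixed_vertices V (\<phi> g)) = 1"
  then obtain w where FVw: "fixed_vertices V (\<phi> g) = {w}" by (rule card_1_singletonE)
  then have w: "w \<in> V" "\<phi> g w = w" unfolding fixed_vertices_def by auto
  have nn: "n \<bullet> n = 1" using n by (simp add: norm_eq_1)
  have RH: "refl_mat n *v (halfturn_mat n *v x) = - x" for x
  proof -
    have i: "n \<bullet> (halfturn_mat n *v x) = n \<bullet> x" by (simp add: half_act inner_diff_right nn)
    show ?thesis unfolding refl_act i by (simp add: half_act)
  qed
  have HR: "halfturn_mat n *v (refl_mat n *v x) = - x" for x
  proof -
    have i: "n \<bullet> (refl_mat n *v x) = - (n \<bullet> x)" by (simp add: refl_act inner_diff_right nn)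
    show ?thesis unfolding half_act i by (simp add: refl_act)
  qed
  have comm: "g \<otimes>\<^bsub>\<Gamma>\<^esub> s = s \<otimes>\<^bsub>\<Gamma>\<^esub> g"
  proof -
    have "\<tau> (g \<otimes>\<^bsub>\<Gamma>\<^esub> s) = \<tau> (s \<otimes>\<^bsub>\<Gamma>\<^esub> g)"
      unfolding tau_mult[OF g s] tau_mult[OF s g] t ts
      by (rule matrix_eq[THEN iffD2]) (simp add: matrix_vector_mul_assoc[symmetric] RH HR)
    then show ?thesis using inj_onD[OF tau_inj] m_c[OF g s] m_c[OF s g] by blast
  qed
  define w' where "w' = \<phi> s w"
  have w'V: "w' \<in> V" unfolding w'_def using phiV[OF s w(1)] .
  have "\<phi> g w' = w'"
    unfolding w'_def using phi_mult[OF g s w(1)] phi_mult[OF s g w(1)] comm w(2) by simp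
  then have "w' \<in> fixed_vertices V (\<phi> g)" using w'V unfolding fixed_vertices_def by simp
  then have "w' = w" using FVw by simp
  have pw: "p w = halfturn_mat n *v p w"
    using sym g w unfolding symmetric_fw_def t[symmetric] by simp
  have pw': "p w' = refl_mat n *v p w"
    using sym s w unfolding symmetric_fw_def w'_def ts[symmetric] by simp
  have "refl_mat n *v p w = - p w" using RH[of "p w"] pw by simp
  then have "p w = - p w" using pw' \<open>w' = w\<close> by simp
  then have "p w $ 1 = - (p w $ 1)" "p w $ 2 = - (p w $ 2)" by (metis vector_uminus_component)+
  then have "p w $ 1 = 0" "p w $ 2 = 0" by simp_all
  then show False using cylfw.oncyl[OF cf w(1)] by simp
qed

lemma main:
  "tight22 V E \<and>
    (is_Ci (\<tau> ` carrier \<Gamma>) \<longrightarrow>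
       (\<forall>g\<in>carrier \<Gamma>. \<tau> g = inversion \<longrightarrow> fixed_edges E (\<phi> g) = {})) \<and>
    (\<forall>s. (is_sigma s \<or> s = sigma') \<and> \<tau> ` carrier \<Gamma> = {mat 1, s} \<longrightarrow>
       (\<forall>g\<in>carrier \<Gamma>. \<tau> g = s \<longrightarrow> fixed_edges E (\<phi> g) = {})) \<and>
    (\<forall>c. is_c2' c \<and> \<tau> ` carrier \<Gamma> = {mat 1, c} \<longrightarrow>
       (\<forall>g\<in>carrier \<Gamma>. \<tau> g = c \<longrightarrow>
          (card (fixed_edges E (\<phi> g)) = 2 \<and> fixed_vertices V (\<phi> g) = {}) \<or>
          (fixed_edges E (\<phi> g) = {} \<and> card (fixed_vertices V (\<phi> g)) = 1))) \<and>
    (\<forall>s c. is_sigma s \<and> is_c2' c \<and> \<tau> ` carrier \<Gamma> = {mat 1, s, sigma', c} \<longrightarrow>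
       (\<forall>g\<in>carrier \<Gamma>. (\<tau> g = s \<or> \<tau> g = sigma') \<longrightarrow> fixed_edges E (\<phi> g) = {}) \<and>
       (\<forall>g\<in>carrier \<Gamma>. \<tau> g = c \<longrightarrow>
          (card (fixed_edges E (\<phi> g)) = 2 \<and> fixed_vertices V (\<phi> g) = {}) \<or>
          (fixed_edges E (\<phi> g) = {} \<and> card (fixed_vertices V (\<phi> g)) = 1))) \<and>
    (\<forall>n. norm n = 1 \<and> n $ 3 = 0 \<and>
        \<tau> ` carrier \<Gamma> = {mat 1, refl_mat n, halfturn_mat n, inversion} \<longrightarrow>
       (\<forall>g\<in>carrier \<Gamma>. (\<tau> g = refl_mat n \<or> \<tau> g = inversion) \<longrightarrow> fixed_edges E (\<phi> g) = {}) \<and>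
       (\<forall>g\<in>carrier \<Gamma>. \<tau> g = halfturn_mat n \<longrightarrow>
          card (fixed_edges E (\<phi> g)) = 2 \<and> fixed_vertices V (\<phi> g) = {}))"
proof -
  have sig: "fixed_edges E (\<phi> g) = {}" if g: "g \<in> carrier \<Gamma>" and s: "is_sigma (\<tau> g)" for g
  proof -
    obtain n where n: "norm n = 1" "n $ 3 = 0" "\<tau> g = refl_mat n" using s unfolding is_sigma_def by blast
    show ?thesis by (rule noedge[OF g, of 1 "-1"]) (use good_refl[OF n(1,2)] n(3) in auto)
  qed
  have sig': "fixed_edges E (\<phi> g) = {}" if g: "g \<in> carrier \<Gamma>" and s: "\<tau> g = sigma'" for g
    by (rule noedge[OF g, of "-1" 1]) (use good_sigma' s in auto)
  have c2: "(card (fixed_edges E (\<phi> g)) = 2 \<and> fixed_vertices V (\<phi> g) = {}) \<or>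
          (fixed_edges E (\<phi> g) = {} \<and> card (fixed_vertices V (\<phi> g)) = 1)"
    if g: "g \<in> carrier \<Gamma>" and c: "is_c2' (\<tau> g)" for g
  proof -
    obtain a where a: "norm a = 1" "a $ 3 = 0" "\<tau> g = halfturn_mat a" using c unfolding is_c2'_def by blast
    show ?thesis using half[OF g a(3) a(1,2)] .
  qed
  have c2h: "card (fixed_edges E (\<phi> g)) = 2 \<and> fixed_vertices V (\<phi> g) = {}"
    if h: "norm n = 1 \<and> n $ 3 = 0 \<and>
        \<tau> ` carrier \<Gamma> = {mat 1, refl_mat n, halfturn_mat n, inversion}"
      and g: "g \<in> carrier \<Gamma>" "\<tau> g = halfturn_mat n" for n g
  proof -
    have n: "norm n = 1" "n $ 3 = 0" using h by auto
    have "refl_mat n \<in> \<tau> ` carrier \<Gamma>" using h by auto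
    then obtain s where s: "s \<in> carrier \<Gamma>" "\<tau> s = refl_mat n" by auto
    have "card (fixed_vertices V (\<phi> g)) \<noteq> 1" using c2h_extra[OF g(1,2) n s] .
    then show ?thesis using half[OF g(1,2) n] by blast
  qed
  have tight: "tight22 V E"
  proof -
    have fe: "fixed_edges E id = E"
    proof
      show "fixed_edges E id \<subseteq> E" unfolding fixed_edges_def by blast
      show "E \<subseteq> fixed_edges E id"
      proof
        fix e assume e: "e \<in> E"
        then obtain a b where "e = {a,b}" using cylfw.edgeE[OF cf] by blast
        then show "e \<in> fixed_edges E id" unfolding fixed_edges_def using e by auto
      qed
    qed
    have fv: "fixed_vertices V id = V" unfolding fixed_vertices_def by simp
    have "real (card (fixed_edges E id) + card (fixed_vertices V id)) =
       real (card (fixed_vertices V id)) * tr3 (mat 1) - 1 - 1"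
      unfolding tr3_def by (rule cylfw.count[OF cf, of id "mat 1" 1 1]) (use good_id in \<open>auto simp: good_def\<close>)
    then have "real (card E + card V) = real (card V) * 3 - 2"
      using good_id(2) unfolding fe fv tr3_def by simp
    then have "int (card E) = 2 * int (card V) - 2" by linarith
    then show ?thesis unfolding tight22_def using cylfw.sparse[OF cf] by simp
  qed
  show ?thesis
  proof (intro conjI allI impI ballI)
    show "tight22 V E" by (rule tight)
  next
    fix g assume "g \<in> carrier \<Gamma>" "\<tau> g = inversion"
    then show "fixed_edges E (\<phi> g) = {}" by (rule noedge_inv)
  next
    fix s g assume h: "(is_sigma s \<or> s = sigma') \<and> \<tau> ` carrier \<Gamma> = {mat 1, s}"
      and g: "g \<in> carrier \<Gamma>" "\<tau> g = s"
    then show "fixed_edges E (\<phi> g) = {}" using sig sig' by auto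
  next
    fix c g assume h: "is_c2' c \<and> \<tau> ` carrier \<Gamma> = {mat 1, c}" and g: "g \<in> carrier \<Gamma>" "\<tau> g = c"
    then show "(card (fixed_edges E (\<phi> g)) = 2 \<and> fixed_vertices V (\<phi> g) = {}) \<or>
          (fixed_edges E (\<phi> g) = {} \<and> card (fixed_vertices V (\<phi> g)) = 1)" using c2 by auto
  next
    fix s c g assume h: "is_sigma s \<and> is_c2' c \<and> \<tau> ` carrier \<Gamma> = {mat 1, s, sigma', c}"
      and g: "g \<in> carrier \<Gamma>" "\<tau> g = s \<or> \<tau> g = sigma'"
    then show "fixed_edges E (\<phi> g) = {}" using sig sig' by auto
  next
    fix s c g assume h: "is_sigma s \<and> is_c2' c \<and> \<tau> ` carrier \<Gamma> = {mat 1, s, sigma', c}"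
      and g: "g \<in> carrier \<Gamma>" "\<tau> g = c"
    then show "(card (fixed_edges E (\<phi> g)) = 2 \<and> fixed_vertices V (\<phi> g) = {}) \<or>
          (fixed_edges E (\<phi> g) = {} \<and> card (fixed_vertices V (\<phi> g)) = 1)" using c2 by auto
  next
    fix n g assume h: "norm n = 1 \<and> n $ 3 = 0 \<and>
        \<tau> ` carrier \<Gamma> = {mat 1, refl_mat n, halfturn_mat n, inversion}"
      and g: "g \<in> carrier \<Gamma>" "\<tau> g = refl_mat n \<or> \<tau> g = inversion"
    show "fixed_edges E (\<phi> g) = {}"
    proof (cases "\<tau> g = inversion")
      case True
      then show ?thesis using noedge_inv g(1) by blast
    next
      case False
      then have "\<tau> g = refl_mat n" using g by blast
      then have "is_sigma (\<tau> g)" using h unfolding is_sigma_def by blast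
      then show ?thesis using sig g(1) by blast
    qed
  next
    fix n g assume h: "norm n = 1 \<and> n $ 3 = 0 \<and>
        \<tau> ` carrier \<Gamma> = {mat 1, refl_mat n, halfturn_mat n, inversion}"
      and g: "g \<in> carrier \<Gamma>" "\<tau> g = halfturn_mat n"
    then show "card (fixed_edges E (\<phi> g)) = 2" using c2h by blast
  next
    fix n g assume h: "norm n = 1 \<and> n $ 3 = 0 \<and>
        \<tau> ` carrier \<Gamma> = {mat 1, refl_mat n, halfturn_mat n, inversion}"
      and g: "g \<in> carrier \<Gamma>" "\<tau> g = halfturn_mat n"
    then show "fixed_vertices V (\<phi> g) = {}" using c2h by blast
  qed
qed

end


theorem theorem3p8:
  fixes \<Gamma> :: "('g, 'b) monoid_scheme"
    and V :: "'v set" and E :: "'v set set"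
    and \<phi> :: "'g \<Rightarrow> 'v \<Rightarrow> 'v" and \<tau> :: "'g \<Rightarrow> real^3^3"
    and p :: "'v \<Rightarrow> real^3"
  assumes "group \<Gamma>" and "finite (carrier \<Gamma>)"
    and "simple_graph V E" and "V \<noteq> {}"
    and "aut_hom \<Gamma> V E \<phi>"
    and "orth_rep \<Gamma> \<tau>"
    and "is_Ci (\<tau> ` carrier \<Gamma>) \<or> is_Cs (\<tau> ` carrier \<Gamma>) \<or> is_C2 (\<tau> ` carrier \<Gamma>)
         \<or> is_C2v (\<tau> ` carrier \<Gamma>) \<or> is_C2h (\<tau> ` carrier \<Gamma>)"
    and "cyl_framework V E p"
    and "symmetric_fw \<Gamma> V \<phi> \<tau> p"
    and "isostatic V E p"
  shows "tight22 V E \<and>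
    (is_Ci (\<tau> ` carrier \<Gamma>) \<longrightarrow>
       (\<forall>g\<in>carrier \<Gamma>. \<tau> g = inversion \<longrightarrow> fixed_edges E (\<phi> g) = {})) \<and>
    (\<forall>s. (is_sigma s \<or> s = sigma') \<and> \<tau> ` carrier \<Gamma> = {mat 1, s} \<longrightarrow>
       (\<forall>g\<in>carrier \<Gamma>. \<tau> g = s \<longrightarrow> fixed_edges E (\<phi> g) = {})) \<and>
    (\<forall>c. is_c2' c \<and> \<tau> ` carrier \<Gamma> = {mat 1, c} \<longrightarrow>
       (\<forall>g\<in>carrier \<Gamma>. \<tau> g = c \<longrightarrow>
          (card (fixed_edges E (\<phi> g)) = 2 \<and> fixed_vertices V (\<phi> g) = {}) \<or>
          (fixed_edges E (\<phi> g) = {} \<and> card (fixed_vertices V (\<phi> g)) = 1))) \<and>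
    (\<forall>s c. is_sigma s \<and> is_c2' c \<and> \<tau> ` carrier \<Gamma> = {mat 1, s, sigma', c} \<longrightarrow>
       (\<forall>g\<in>carrier \<Gamma>. (\<tau> g = s \<or> \<tau> g = sigma') \<longrightarrow> fixed_edges E (\<phi> g) = {}) \<and>
       (\<forall>g\<in>carrier \<Gamma>. \<tau> g = c \<longrightarrow>
          (card (fixed_edges E (\<phi> g)) = 2 \<and> fixed_vertices V (\<phi> g) = {}) \<or>
          (fixed_edges E (\<phi> g) = {} \<and> card (fixed_vertices V (\<phi> g)) = 1))) \<and>
    (\<forall>n. norm n = 1 \<and> n $ 3 = 0 \<and>
        \<tau> ` carrier \<Gamma> = {mat 1, refl_mat n, halfturn_mat n, inversion} \<longrightarrow>
       (\<forall>g\<in>carrier \<Gamma>. (\<tau> g = refl_mat n \<or> \<tau> g = inversion) \<longrightarrow> fixed_edges E (\<phi> g) = {}) \<and>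
       (\<forall>g\<in>carrier \<Gamma>. \<tau> g = halfturn_mat n \<longrightarrow>
          card (fixed_edges E (\<phi> g)) = 2 \<and> fixed_vertices V (\<phi> g) = {}))"
  proof -
  interpret T: thmset \<Gamma> V E \<phi> \<tau> p
    using assms unfolding thmset_def by blast
  show ?thesis by (rule T.main)
qed

end
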